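(* There is a unique algebra homomorphism $\psi:U^j\to U$ such that $\psi(\mathbf e_i)=f_i+f_{\bar i}$, $\psi(\mathbf f_i)=e_i+e_{\bar i}$ for $1\le i<n$; $\psi(\mathbf e_n)=2f_n$, $\psi(\mathbf f_n)=e_n$; $\psi(\mathbf d_i)=-h_i-h_{\bar i}$ for $1\le i\le n$; and $\psi(\mathbf d_{n+1})=-2h_{n+1}$.
   Context: Fix $n\ge1$. Let $\mathfrak g=\mathfrak{gl}_{2n+1}(\mathbb C)$ with matrix units $E_{a,b}$, $E_i=E_{i,i+1}$, $F_i=E_{i+1,i}$, $H_i=E_{i,i}$. Let $\theta(X)=JXJ^{-1}$ where $J$ is the antidiagonal permutation matrix (so $\theta(E_{a,b})=E_{2n+2-a,2n+2-b}$), $\mathfrak g^\theta$ its fixed-point Lie subalgebra and $U^j=U(\mathfrak g^\theta)$. Set $\mathbf e_i=E_i+F_{2n+1-i}$, $\mathbf f_i=F_i+E_{2n+1-i}$, $\mathbf d_i=H_i+H_{2n+2-i}$ ($1\le i\le n$), $\mathbf d_{n+1}=2H_{n+1}$; these generate $U^j$. Let $U=U(\mathfrak{gl}_{n+1}(\mathbb C)\oplus\mathfrak{gl}_n(\mathbb C))$, where $e_i=E_{i,i+1}$, $f_i=E_{i+1,i}$ ($1\le i\le n$), $h_i=E_{i,i}$ ($1\le i\le n+1$) are the Chevalley generators of $\mathfrak{gl}_{n+1}$, and $e_{\bar i}=E_{i,i+1},f_{\bar i}=E_{i+1,i}$ ($1\le i\le n-1$), $h_{\bar i}=E_{i,i}$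 ($1\le i\le n$) those of $\mathfrak{gl}_n$; elements of the two summands commute. *)

theory Defs
  imports "Jordan_Normal_Form.Matrix"
begin

definition calg :: "(complex \<Rightarrow> 'a::ring_1 \<Rightarrow> 'a) \<Rightarrow> bool" where
  "calg sc \<longleftrightarrow>
     (\<forall>c x y. sc c (x + y) = sc c x + sc c y) \<and>
     (\<forall>c d x. sc (c + d) x = sc c x + sc d x) \<and>
     (\<forall>c d x. sc (c * d) x = sc c (sc d x)) \<and>
     (\<forall>x. sc 1 x = x) \<and>
     (\<forall>c x y. sc c (x * y) = sc c x * y) \<and>
     (\<forall>c x y. sc c (x * y) = x * sc c y)"

definition alg_hom :: "(complex \<Rightarrow> 'a::ring_1 \<Rightarrow> 'a) \<Rightarrow> (complex \<Rightarrow> 'b::ring_1 \<Rightarrow> 'b)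
    \<Rightarrow> ('a \<Rightarrow> 'b) \<Rightarrow> bool" where
  "alg_hom scA scB \<Phi> \<longleftrightarrow> \<Phi> 1 = 1 \<and>
     (\<forall>x y. \<Phi> (x + y) = \<Phi> x + \<Phi> y) \<and>
     (\<forall>x y. \<Phi> (x * y) = \<Phi> x * \<Phi> y) \<and>
     (\<forall>c x. \<Phi> (scA c x) = scB c (\<Phi> x))"

definition lie_map :: "'v set \<Rightarrow> ('v \<Rightarrow> 'v \<Rightarrow> 'v) \<Rightarrow> (complex \<Rightarrow> 'v \<Rightarrow> 'v)
    \<Rightarrow> ('v \<Rightarrow> 'v \<Rightarrow> 'v) \<Rightarrow> (complex \<Rightarrow> 'b::ring_1 \<Rightarrow> 'b) \<Rightarrow> ('v \<Rightarrow> 'b) \<Rightarrow> bool" where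
  "lie_map L addv scv brv sc \<phi> \<longleftrightarrow>
     (\<forall>x\<in>L. \<forall>y\<in>L. \<phi> (addv x y) = \<phi> x + \<phi> y) \<and>
     (\<forall>c. \<forall>x\<in>L. \<phi> (scv c x) = sc c (\<phi> x)) \<and>
     (\<forall>x\<in>L. \<forall>y\<in>L. \<phi> (brv x y) = \<phi> x * \<phi> y - \<phi> y * \<phi> x)"

text \<open>(A, scA, \<iota>) is a universal enveloping algebra of the Lie algebra L, where the
  universal property is asserted for all complex algebra structures on the type 'c.\<close>
definition is_uea :: "'v set \<Rightarrow> ('v \<Rightarrow> 'v \<Rightarrow> 'v) \<Rightarrow> (complex \<Rightarrow> 'v \<Rightarrow> 'v)
    \<Rightarrow> ('v \<Rightarrow> 'v \<Rightarrow> 'v) \<Rightarrow> (complex \<Rightarrow> 'a::ring_1 \<Rightarrow> 'a) \<Rightarrow> ('v \<Rightarrow> 'a)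
    \<Rightarrow> 'c::ring_1 itself \<Rightarrow> bool" where
  "is_uea L addv scv brv scA \<iota> (_::'c itself) \<longleftrightarrow>
     calg scA \<and> lie_map L addv scv brv scA \<iota> \<and>
     (\<forall>scB::complex \<Rightarrow> 'c \<Rightarrow> 'c. calg scB \<longrightarrow>
        (\<forall>\<phi>. lie_map L addv scv brv scB \<phi> \<longrightarrow>
           (\<exists>!\<Phi>. alg_hom scA scB \<Phi> \<and> (\<forall>x\<in>L. \<Phi> (\<iota> x) = \<phi> x))))"

text \<open>Matrix units, 1-indexed as in the paper: E N a b = E_{a,b} in gl_N.\<close>
definition Eu :: "nat \<Rightarrow> nat \<Rightarrow> nat \<Rightarrow> complex mat" where
  "Eu N a b = mat N N (\<lambda>(i, j). if i = a - 1 \<and> j = b - 1 then 1 else 0)"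

definition Jm :: "nat \<Rightarrow> complex mat" where
  "Jm N = mat N N (\<lambda>(i, j). if i + j = N - 1 then 1 else 0)"

text \<open>theta(X) = J X J^{-1}; note J^{-1} = J.\<close>
definition theta :: "nat \<Rightarrow> complex mat \<Rightarrow> complex mat" where
  "theta N X = Jm N * X * Jm N"

definition gtheta :: "nat \<Rightarrow> complex mat set" where
  "gtheta n = {X \<in> carrier_mat (2*n+1) (2*n+1). theta (2*n+1) X = X}"

definition commutator :: "complex mat \<Rightarrow> complex mat \<Rightarrow> complex mat" where
  "commutator X Y = X * Y - Y * X"

definition be :: "nat \<Rightarrow> nat \<Rightarrow> complex mat" where
  "be n i = Eu (2*n+1) i (i+1) + Eu (2*n+1) (2*n+2-i) (2*n+1-i)"
definition bf :: "nat \<Rightarrow> nat \<Rightarrow> complex mat" where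
  "bf n i = Eu (2*n+1) (i+1) i + Eu (2*n+1) (2*n+1-i) (2*n+2-i)"
definition bd :: "nat \<Rightarrow> nat \<Rightarrow> complex mat" where
  "bd n i = (if i = n + 1 then 2 \<cdot>\<^sub>m Eu (2*n+1) (n+1) (n+1)
             else Eu (2*n+1) i i + Eu (2*n+1) (2*n+2-i) (2*n+2-i))"

definition gsum :: "nat \<Rightarrow> (complex mat \<times> complex mat) set" where
  "gsum n = carrier_mat (n+1) (n+1) \<times> carrier_mat n n"
definition padd :: "complex mat \<times> complex mat \<Rightarrow> complex mat \<times> complex mat \<Rightarrow> complex mat \<times> complex mat" where
  "padd x y = (fst x + fst y, snd x + snd y)"
definition psc :: "complex \<Rightarrow> complex mat \<times> complex mat \<Rightarrow> complex mat \<times> complex mat" where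
  "psc c x = (c \<cdot>\<^sub>m fst x, c \<cdot>\<^sub>m snd x)"
definition pbr :: "complex mat \<times> complex mat \<Rightarrow> complex mat \<times> complex mat \<Rightarrow> complex mat \<times> complex mat" where
  "pbr x y = (commutator (fst x) (fst y), commutator (snd x) (snd y))"

text \<open>Chevalley generators: e_i, f_i, h_i of gl_{n+1}; e_ibar, f_ibar, h_ibar of gl_n.\<close>
definition ce :: "nat \<Rightarrow> nat \<Rightarrow> complex mat \<times> complex mat" where
  "ce n i = (Eu (n+1) i (i+1), 0\<^sub>m n n)"
definition cf :: "nat \<Rightarrow> nat \<Rightarrow> complex mat \<times> complex mat" where
  "cf n i = (Eu (n+1) (i+1) i, 0\<^sub>m n n)"
definition ch :: "nat \<Rightarrow> nat \<Rightarrow> complex mat \<times> complex mat" where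
  "ch n i = (Eu (n+1) i i, 0\<^sub>m n n)"
definition ceb :: "nat \<Rightarrow> nat \<Rightarrow> complex mat \<times> complex mat" where
  "ceb n i = (0\<^sub>m (n+1) (n+1), Eu n i (i+1))"
definition cfb :: "nat \<Rightarrow> nat \<Rightarrow> complex mat \<times> complex mat" where
  "cfb n i = (0\<^sub>m (n+1) (n+1), Eu n (i+1) i)"
definition chb :: "nat \<Rightarrow> nat \<Rightarrow> complex mat \<times> complex mat" where
  "chb n i = (0\<^sub>m (n+1) (n+1), Eu n i i)"

end

theory Submission
  imports Defs
begin


lemma sum_supp0: "(\<And>a::nat. a < N \<Longrightarrow> g a = 0) \<Longrightarrow> (\<Sum>a=0..<N. g a) = 0"
  by (rule sum.neutral) auto

lemma sum_supp1: "(p::nat) < N \<Longrightarrow> (\<And>a. a < N \<Longrightarrow> a \<noteq> p \<Longrightarrow> g a = 0) \<Longrightarrow> (\<Sum>a=0..<N. g a) = g p"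
proof -
  assume p: "p < N" and z: "\<And>a. a < N \<Longrightarrow> a \<noteq> p \<Longrightarrow> g a = 0"
  have "(\<Sum>a=0..<N. g a) = (\<Sum>a\<in>{p}. g a)"
    using p z by (intro sum.mono_neutral_right) auto
  then show ?thesis by simp
qed

lemma sum_supp2: "(p::nat) < N \<Longrightarrow> q < N \<Longrightarrow> p \<noteq> q \<Longrightarrow> (\<And>a. a < N \<Longrightarrow> a \<noteq> p \<Longrightarrow> a \<noteq> q \<Longrightarrow> g a = 0)
   \<Longrightarrow> (\<Sum>a=0..<N. g a) = g p + g q"
proof -
  assume p: "p < N" "q < N" "p \<noteq> q" and z: "\<And>a. a < N \<Longrightarrow> a \<noteq> p \<Longrightarrow> a \<noteq> q \<Longrightarrow> g a = 0"
  have "(\<Sum>a=0..<N. g a) = (\<Sum>a\<in>{p,q}. g a)"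
    using p z by (intro sum.mono_neutral_right) auto
  then show ?thesis using p by simp
qed

lemma mult_entry: "A \<in> carrier_mat r m \<Longrightarrow> B \<in> carrier_mat m c \<Longrightarrow> i < r \<Longrightarrow> j < c \<Longrightarrow>
   (A * B) $$ (i,j) = (\<Sum>a=0..<m. A $$ (i,a) * B $$ (a,j))"
  by (simp add: index_mult_mat scalar_prod_def)

definition Rp :: "nat \<Rightarrow> complex mat" where
  "Rp n = mat (2*n+1) (n+1) (\<lambda>(a,k). (-1)^k * (if k < n then (if a = k \<or> a = 2*n-k then 1 else 0)
      else (if a = n then 2 else 0)))"
definition Lp :: "nat \<Rightarrow> complex mat" where
  "Lp n = mat (n+1) (2*n+1) (\<lambda>(k,a). (-1)^k * (if k < n then (if a = k \<or> a = 2*n-k then 1/2 else 0)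
      else (if a = n then 1/2 else 0)))"
definition Rm :: "nat \<Rightarrow> complex mat" where
  "Rm n = mat (2*n+1) n (\<lambda>(a,k). (-1)^k * (if a = k then 1 else if a = 2*n-k then -1 else 0))"
definition Lm :: "nat \<Rightarrow> complex mat" where
  "Lm n = mat n (2*n+1) (\<lambda>(k,a). (-1)^k * (if a = k then 1/2 else if a = 2*n-k then -1/2 else 0))"

lemma Rp_c[simp]: "Rp n \<in> carrier_mat (2*n+1) (n+1)" by (simp add: Rp_def)
lemma Lp_c[simp]: "Lp n \<in> carrier_mat (n+1) (2*n+1)" by (simp add: Lp_def)
lemma Rm_c[simp]: "Rm n \<in> carrier_mat (2*n+1) n" by (simp add: Rm_def)
lemma Lm_c[simp]: "Lm n \<in> carrier_mat n (2*n+1)" by (simp add: Lm_def)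
lemma J_c[simp]: "Jm N \<in> carrier_mat N N" by (simp add: Jm_def)
lemma dims[simp]: "dim_row (Rp n) = Suc (2*n)" "dim_col (Rp n) = Suc n"
  "dim_row (Lp n) = Suc n" "dim_col (Lp n) = Suc (2*n)"
  "dim_row (Rm n) = Suc (2*n)" "dim_col (Rm n) = n"
  "dim_row (Lm n) = n" "dim_col (Lm n) = Suc (2*n)"
  "dim_row (Jm N) = N" "dim_col (Jm N) = N"
  by (auto simp: Rp_def Lp_def Rm_def Lm_def Jm_def)

lemma JJ: "Jm N * Jm N = 1\<^sub>m N"
proof (rule eq_matI)
  fix i j assume ij: "i < dim_row (1\<^sub>m N)" "j < dim_col (1\<^sub>m N)"
  then have "(Jm N * Jm N) $$ (i,j) = (\<Sum>a=0..<N. Jm N $$ (i,a) * Jm N $$ (a,j))"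
    using ij by (intro mult_entry[OF J_c J_c]) auto
  also have "\<dots> = Jm N $$ (i,N-1-i) * Jm N $$ (N-1-i,j)"
    by (rule sum_supp1) (use ij in \<open>auto simp: Jm_def\<close>)
  also have "\<dots> = 1\<^sub>m N $$ (i,j)" using ij by (auto simp: Jm_def)
  finally show "(Jm N * Jm N) $$ (i,j) = 1\<^sub>m N $$ (i,j)" .
qed auto

lemma LpJ: "Lp n * Jm (2*n+1) = Lp n"
proof (rule eq_matI)
  fix i j assume ij: "i < dim_row (Lp n)" "j < dim_col (Lp n)"
  then have "(Lp n * Jm (2*n+1)) $$ (i,j) = (\<Sum>a=0..<2*n+1. Lp n $$ (i,a) * Jm (2*n+1) $$ (a,j))"
    using ij by (intro mult_entry[OF Lp_c J_c]) auto
  also have "\<dots> = Lp n $$ (i,2*n-j) * Jm (2*n+1) $$ (2*n-j,j)"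
    by (rule sum_supp1) (use ij in \<open>auto simp: Jm_def Lp_def\<close>)
  also have "\<dots> = Lp n $$ (i,j)" using ij by (auto simp: Jm_def Lp_def)
  finally show "(Lp n * Jm (2*n+1)) $$ (i,j) = Lp n $$ (i,j)" .
qed auto

lemma JRp: "Jm (2*n+1) * Rp n = Rp n"
proof (rule eq_matI)
  fix i j assume ij: "i < dim_row (Rp n)" "j < dim_col (Rp n)"
  then have "(Jm (2*n+1) * Rp n) $$ (i,j) = (\<Sum>a=0..<2*n+1. Jm (2*n+1) $$ (i,a) * Rp n $$ (a,j))"
    using ij by (intro mult_entry[OF J_c Rp_c]) auto
  also have "\<dots> = Jm (2*n+1) $$ (i,2*n-i) * Rp n $$ (2*n-i,j)"
    by (rule sum_supp1) (use ij in \<open>auto simp: Jm_def Rp_def\<close>)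
  also have "\<dots> = Rp n $$ (i,j)" using ij by (auto simp: Jm_def Rp_def)
  finally show "(Jm (2*n+1) * Rp n) $$ (i,j) = Rp n $$ (i,j)" .
qed auto

lemma LmJ: "Lm n * Jm (2*n+1) = - Lm n"
proof (rule eq_matI)
  fix i j assume ij: "i < dim_row (- Lm n)" "j < dim_col (- Lm n)"
  then have "(Lm n * Jm (2*n+1)) $$ (i,j) = (\<Sum>a=0..<2*n+1. Lm n $$ (i,a) * Jm (2*n+1) $$ (a,j))"
    using ij by (intro mult_entry[OF Lm_c J_c]) auto
  also have "\<dots> = Lm n $$ (i,2*n-j) * Jm (2*n+1) $$ (2*n-j,j)"
    by (rule sum_supp1) (use ij in \<open>auto simp: Jm_def Lm_def\<close>)
  also have "\<dots> = (- Lm n) $$ (i,j)" using ij by (auto simp: Jm_def Lm_def)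
  finally show "(Lm n * Jm (2*n+1)) $$ (i,j) = (- Lm n) $$ (i,j)" .
qed auto

lemma JRm: "Jm (2*n+1) * Rm n = - Rm n"
proof (rule eq_matI)
  fix i j assume ij: "i < dim_row (- Rm n)" "j < dim_col (- Rm n)"
  then have "(Jm (2*n+1) * Rm n) $$ (i,j) = (\<Sum>a=0..<2*n+1. Jm (2*n+1) $$ (i,a) * Rm n $$ (a,j))"
    using ij by (intro mult_entry[OF J_c Rm_c]) auto
  also have "\<dots> = Jm (2*n+1) $$ (i,2*n-i) * Rm n $$ (2*n-i,j)"
    by (rule sum_supp1) (use ij in \<open>auto simp: Jm_def Rm_def\<close>)
  also have "\<dots> = (- Rm n) $$ (i,j)" using ij by (auto simp: Jm_def Rm_def)
  finally show "(Jm (2*n+1) * Rm n) $$ (i,j) = (- Rm n) $$ (i,j)" .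
qed auto


lemma LpRp: "Lp n * Rp n = 1\<^sub>m (n+1)"
proof (rule eq_matI)
  fix i j assume ij: "i < dim_row (1\<^sub>m (n+1))" "j < dim_col (1\<^sub>m (n+1))"
  then have e: "(Lp n * Rp n) $$ (i,j) = (\<Sum>a=0..<2*n+1. Lp n $$ (i,a) * Rp n $$ (a,j))"
    by (intro mult_entry[OF Lp_c Rp_c]) auto
  show "(Lp n * Rp n) $$ (i,j) = 1\<^sub>m (n+1) $$ (i,j)"
  proof (cases "i < n")
    case True
    have "(\<Sum>a=0..<2*n+1. Lp n $$ (i,a) * Rp n $$ (a,j)) = Lp n $$ (i,i) * Rp n $$ (i,j) + Lp n $$ (i,2*n-i) * Rp n $$ (2*n-i,j)"
      by (rule sum_supp2) (use ij True in \<open>auto simp: Lp_def\<close>)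
    then show ?thesis using e ij True by (auto simp: Lp_def Rp_def)
  next
    case False
    have "(\<Sum>a=0..<2*n+1. Lp n $$ (i,a) * Rp n $$ (a,j)) = Lp n $$ (i,n) * Rp n $$ (n,j)"
      by (rule sum_supp1) (use ij False in \<open>auto simp: Lp_def\<close>)
    then have "(Lp n * Rp n) $$ (i,j) = Lp n $$ (i,n) * Rp n $$ (n,j)" using e by simp
    also have "\<dots> = 1\<^sub>m (n+1) $$ (i,j)" using ij False by (auto simp: Lp_def Rp_def)
    finally show ?thesis .
  qed
qed auto

lemma LmRm: "Lm n * Rm n = 1\<^sub>m n"
proof (rule eq_matI)
  fix i j assume ij: "i < dim_row (1\<^sub>m n)" "j < dim_col (1\<^sub>m n)"
  then have e: "(Lm n * Rm n) $$ (i,j) = (\<Sum>a=0..<2*n+1. Lm n $$ (i,a) * Rm n $$ (a,j))"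
    by (intro mult_entry[OF Lm_c Rm_c]) auto
  have "(\<Sum>a=0..<2*n+1. Lm n $$ (i,a) * Rm n $$ (a,j)) = Lm n $$ (i,i) * Rm n $$ (i,j) + Lm n $$ (i,2*n-i) * Rm n $$ (2*n-i,j)"
    by (rule sum_supp2) (use ij in \<open>auto simp: Lm_def\<close>)
  then show "(Lm n * Rm n) $$ (i,j) = 1\<^sub>m n $$ (i,j)" using e ij by (auto simp: Lm_def Rm_def)
qed auto

lemma LpRm: "Lp n * Rm n = 0\<^sub>m (n+1) n"
proof (rule eq_matI)
  fix i j assume ij: "i < dim_row (0\<^sub>m (n+1) n)" "j < dim_col (0\<^sub>m (n+1) n)"
  then have e: "(Lp n * Rm n) $$ (i,j) = (\<Sum>a=0..<2*n+1. Lp n $$ (i,a) * Rm n $$ (a,j))"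
    by (intro mult_entry[OF Lp_c Rm_c]) auto
  show "(Lp n * Rm n) $$ (i,j) = 0\<^sub>m (n+1) n $$ (i,j)"
  proof (cases "i < n")
    case True
    have "(\<Sum>a=0..<2*n+1. Lp n $$ (i,a) * Rm n $$ (a,j)) = Lp n $$ (i,i) * Rm n $$ (i,j) + Lp n $$ (i,2*n-i) * Rm n $$ (2*n-i,j)"
      by (rule sum_supp2) (use ij True in \<open>auto simp: Lp_def\<close>)
    then show ?thesis using e ij True by (auto simp: Lp_def Rm_def)
  next
    case False
    have "(\<Sum>a=0..<2*n+1. Lp n $$ (i,a) * Rm n $$ (a,j)) = Lp n $$ (i,n) * Rm n $$ (n,j)"
      by (rule sum_supp1) (use ij False in \<open>auto simp: Lp_def\<close>)
    then have "(Lp n * Rm n) $$ (i,j) = Lp n $$ (i,n) * Rm n $$ (n,j)" using e by simp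
    also have "\<dots> = 0\<^sub>m (n+1) n $$ (i,j)" using ij False by (auto simp: Lp_def Rm_def)
    finally show ?thesis .
  qed
qed auto

lemma LmRp: "Lm n * Rp n = 0\<^sub>m n (n+1)"
proof (rule eq_matI)
  fix i j assume ij: "i < dim_row (0\<^sub>m n (n+1))" "j < dim_col (0\<^sub>m n (n+1))"
  then have e: "(Lm n * Rp n) $$ (i,j) = (\<Sum>a=0..<2*n+1. Lm n $$ (i,a) * Rp n $$ (a,j))"
    by (intro mult_entry[OF Lm_c Rp_c]) auto
  have "(\<Sum>a=0..<2*n+1. Lm n $$ (i,a) * Rp n $$ (a,j)) = Lm n $$ (i,i) * Rp n $$ (i,j) + Lm n $$ (i,2*n-i) * Rp n $$ (2*n-i,j)"
    by (rule sum_supp2) (use ij in \<open>auto simp: Lm_def\<close>)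
  then show "(Lm n * Rp n) $$ (i,j) = 0\<^sub>m n (n+1) $$ (i,j)" using e ij by (auto simp: Lm_def Rp_def)
qed auto

lemma RL: "Rp n * Lp n + Rm n * Lm n = 1\<^sub>m (2*n+1)"
proof (rule eq_matI)
  fix i j assume ij: "i < dim_row (1\<^sub>m (2*n+1))" "j < dim_col (1\<^sub>m (2*n+1))"
  then have e1: "(Rp n * Lp n) $$ (i,j) = (\<Sum>a=0..<n+1. Rp n $$ (i,a) * Lp n $$ (a,j))"
    by (intro mult_entry[OF Rp_c Lp_c]) auto
  from ij have e2: "(Rm n * Lm n) $$ (i,j) = (\<Sum>a=0..<n. Rm n $$ (i,a) * Lm n $$ (a,j))"
    by (intro mult_entry[OF Rm_c Lm_c]) auto
  define m where "m = (if i \<le> n then i else 2*n - i)"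
  have m: "m \<le> n" "i = m \<or> i = 2*n - m" using ij by (auto simp: m_def)
  have s1: "(\<Sum>a=0..<n+1. Rp n $$ (i,a) * Lp n $$ (a,j)) = Rp n $$ (i,m) * Lp n $$ (m,j)"
    by (rule sum_supp1) (use ij m in \<open>auto simp: Rp_def\<close>)
  show "(Rp n * Lp n + Rm n * Lm n) $$ (i,j) = 1\<^sub>m (2*n+1) $$ (i,j)"
  proof (cases "m = n")
    case True
    have s2: "(\<Sum>a=0..<n. Rm n $$ (i,a) * Lm n $$ (a,j)) = 0"
      by (rule sum_supp0) (use ij m True in \<open>auto simp: Rm_def\<close>)
    show ?thesis using e1 e2 s1 s2 ij m True by (auto simp: Rp_def Lp_def)
  next
    case False
    have s2: "(\<Sum>a=0..<n. Rm n $$ (i,a) * Lm n $$ (a,j)) = Rm n $$ (i,m) * Lm n $$ (m,j)"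
      by (rule sum_supp1) (use ij m False in \<open>auto simp: Rm_def\<close>)
    show ?thesis using e1 e2 s1 s2 ij m False by (auto simp: Rp_def Lp_def Rm_def Lm_def)
  qed
qed auto



lemma cS[simp]: "Rp n \<in> carrier_mat (Suc (2*n)) (Suc n)" "Lp n \<in> carrier_mat (Suc n) (Suc (2*n))"
  "Rm n \<in> carrier_mat (Suc (2*n)) n" "Lm n \<in> carrier_mat n (Suc (2*n))"
  using Rp_c Lp_c Rm_c Lm_c by auto

lemma cneg0: "(a::complex) = - a \<Longrightarrow> a = 0" by (simp add: complex_eq_iff)

lemma selfneg0: "A \<in> carrier_mat r c \<Longrightarrow> A = - A \<Longrightarrow> A = 0\<^sub>m r c" for A :: "complex mat"
proof (rule eq_matI)
  fix i j assume A: "A \<in> carrier_mat r c" "A = - A" and ij: "i < dim_row (0\<^sub>m r c)" "j < dim_col (0\<^sub>m r c)"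
  from A(2) have "A $$ (i,j) = (- A) $$ (i,j)" by (rule arg_cong)
  also have "\<dots> = - A $$ (i,j)" using ij A(1) by simp
  finally have "A $$ (i,j) = 0" by (rule cneg0)
  then show "A $$ (i,j) = 0\<^sub>m r c $$ (i,j)" using ij by simp
qed (auto)

lemma assoc_d: "dim_col A = dim_row B \<Longrightarrow> dim_col B = dim_row C \<Longrightarrow> A * B * C = A * (B * C)"
  by (rule assoc_mult_mat[of A "dim_row A" "dim_col A" B "dim_col B" C "dim_col C"]) auto
lemma distl_d: "dim_col A = dim_row B \<Longrightarrow> dim_row B = dim_row C \<Longrightarrow> dim_col B = dim_col C \<Longrightarrow> A * (B + C) = A * B + A * C"
  by (rule mult_add_distrib_mat[of A "dim_row A" "dim_col A" B "dim_col B"]) auto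
lemma distr_d: "dim_row B = dim_row A \<Longrightarrow> dim_col B = dim_col A \<Longrightarrow> dim_col A = dim_row C \<Longrightarrow> (A + B) * C = A * C + B * C"
  by (rule add_mult_distrib_mat[of A "dim_row A" "dim_col A" B C "dim_col C"]) auto

definition inGt :: "nat \<Rightarrow> complex mat \<Rightarrow> bool" where
  "inGt n X \<longleftrightarrow> X \<in> carrier_mat (Suc (2*n)) (Suc (2*n)) \<and> Jm (Suc (2*n)) * X * Jm (Suc (2*n)) = X"

lemma gtheta_iff: "X \<in> gtheta n \<longleftrightarrow> inGt n X"
  by (simp add: gtheta_def theta_def inGt_def)

lemma JX: assumes "inGt n X" shows "Jm (Suc (2*n)) * X = X * Jm (Suc (2*n))"
proof -
  let ?J = "Jm (Suc (2*n))"
  have X: "X \<in> carrier_mat (Suc (2*n)) (Suc (2*n))" and e: "?J * X * ?J = X" using assms by (auto simp: inGt_def)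
  have JJ': "?J * ?J = 1\<^sub>m (Suc (2*n))" by (rule JJ)
  have "?J * X = ?J * (?J * X * ?J)" using e by simp
  also have "\<dots> = (?J * ?J) * X * ?J" using X by (simp add: assoc_d)
  also have "\<dots> = X * ?J" using X JJ' by simp
  finally show ?thesis .
qed

lemma LpXRm: assumes "inGt n X" shows "Lp n * X * Rm n = 0\<^sub>m (Suc n) n"
proof -
  let ?J = "Jm (Suc (2*n))"
  have X: "X \<in> carrier_mat (Suc (2*n)) (Suc (2*n))" using assms by (auto simp: inGt_def)
  have "Lp n * X * Rm n = (Lp n * ?J) * X * Rm n" using LpJ[of n] by simp
  also have "\<dots> = Lp n * (?J * X) * Rm n" using X by (simp add: assoc_d)
  also have "\<dots> = Lp n * (X * ?J) * Rm n" using JX[OF assms] by simp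
  also have "\<dots> = Lp n * X * (?J * Rm n)" using X by (simp add: assoc_d)
  also have "\<dots> = - (Lp n * X * Rm n)" using JRm[of n] X by simp
  finally have "Lp n * X * Rm n = - (Lp n * X * Rm n)" .
  then show ?thesis using X by (intro selfneg0) auto
qed

lemma LmXRp: assumes "inGt n X" shows "Lm n * X * Rp n = 0\<^sub>m n (Suc n)"
proof -
  let ?J = "Jm (Suc (2*n))"
  have X: "X \<in> carrier_mat (Suc (2*n)) (Suc (2*n))" using assms by (auto simp: inGt_def)
  have "Lm n * X * Rp n = - ((Lm n * ?J) * X * Rp n)" using LmJ[of n] X by simp
  also have "(Lm n * ?J) * X * Rp n = Lm n * (?J * X) * Rp n" using X by (simp add: assoc_d)
  also have "\<dots> = Lm n * (X * ?J) * Rp n" using JX[OF assms] by simp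
  also have "\<dots> = Lm n * X * (?J * Rp n)" using X by (simp add: assoc_d)
  also have "\<dots> = Lm n * X * Rp n" using JRp[of n] X by simp
  finally have "Lm n * X * Rp n = - (Lm n * X * Rp n)" .
  then show ?thesis using X by (intro selfneg0) auto
qed

lemma mdistl_d: "dim_col A = dim_row B \<Longrightarrow> dim_row B = dim_row C \<Longrightarrow> dim_col B = dim_col C \<Longrightarrow> A * (B - C) = A * B - A * C"
  for A :: "complex mat"
  by (rule mult_minus_distrib_mat[of A "dim_row A" "dim_col A" B "dim_col B"]) auto
lemma mdistr_d: "dim_row B = dim_row A \<Longrightarrow> dim_col B = dim_col A \<Longrightarrow> dim_col A = dim_row C \<Longrightarrow> (A - B) * C = A * C - B * C"
  for A :: "complex mat"
  by (rule minus_mult_distrib_mat[of A "dim_row A" "dim_col A" B C "dim_col C"]) auto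
lemma smultl_d: "dim_col A = dim_row B \<Longrightarrow> A * (c \<cdot>\<^sub>m B) = c \<cdot>\<^sub>m (A * B)" for A :: "complex mat"
  by (rule mult_smult_distrib[of A "dim_row A" "dim_col A" B "dim_col B"]) auto
lemma smultr_d: "dim_col A = dim_row B \<Longrightarrow> (c \<cdot>\<^sub>m A) * B = c \<cdot>\<^sub>m (A * B)" for A :: "complex mat"
  by (rule mult_smult_assoc_mat[of A "dim_row A" "dim_col A" B "dim_col B"]) auto

lemma inGt_dims: "inGt n X \<Longrightarrow> dim_row X = Suc (2*n) \<and> dim_col X = Suc (2*n)"
  by (auto simp: inGt_def)

lemma LXYR_p: assumes X: "inGt n X" and Y: "inGt n Y"
  shows "Lp n * (X * Y) * Rp n = (Lp n * X * Rp n) * (Lp n * Y * Rp n)"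
proof -
  have dX: "dim_row X = Suc (2*n)" "dim_col X = Suc (2*n)" and dY: "dim_row Y = Suc (2*n)" "dim_col Y = Suc (2*n)"
    using inGt_dims[OF X] inGt_dims[OF Y] by auto
  have "Lp n * (X * Y) * Rp n = Lp n * (X * (Rp n * Lp n + Rm n * Lm n) * Y) * Rp n"
    using dX dY by (simp only: RL) simp
  also have "\<dots> = Lp n * (X * (Rp n * Lp n) * Y) * Rp n + Lp n * (X * (Rm n * Lm n) * Y) * Rp n"
    using dX dY by (simp add: distl_d distr_d)
  also have "Lp n * (X * (Rm n * Lm n) * Y) * Rp n = (Lp n * X * Rm n) * (Lm n * Y * Rp n)"
    using dX dY by (simp add: assoc_d)
  also have "\<dots> = 0\<^sub>m (Suc n) (Suc n)" using LpXRm[OF X] dY by simp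
  also have "Lp n * (X * (Rp n * Lp n) * Y) * Rp n = (Lp n * X * Rp n) * (Lp n * Y * Rp n)"
    using dX dY by (simp add: assoc_d)
  finally have e: "Lp n * (X * Y) * Rp n = (Lp n * X * Rp n) * (Lp n * Y * Rp n) + 0\<^sub>m (Suc n) (Suc n)" .
  have "(Lp n * X * Rp n) * (Lp n * Y * Rp n) \<in> carrier_mat (Suc n) (Suc n)" using dX dY by (intro carrier_matI) simp_all
  then show ?thesis using e by (metis right_add_zero_mat)
qed

lemma LXYR_m: assumes X: "inGt n X" and Y: "inGt n Y"
  shows "Lm n * (X * Y) * Rm n = (Lm n * X * Rm n) * (Lm n * Y * Rm n)"
proof -
  have dX: "dim_row X = Suc (2*n)" "dim_col X = Suc (2*n)" and dY: "dim_row Y = Suc (2*n)" "dim_col Y = Suc (2*n)"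
    using inGt_dims[OF X] inGt_dims[OF Y] by auto
  have "Lm n * (X * Y) * Rm n = Lm n * (X * (Rp n * Lp n + Rm n * Lm n) * Y) * Rm n"
    using dX dY by (simp only: RL) simp
  also have "\<dots> = Lm n * (X * (Rp n * Lp n) * Y) * Rm n + Lm n * (X * (Rm n * Lm n) * Y) * Rm n"
    using dX dY by (simp add: distl_d distr_d)
  also have "Lm n * (X * (Rp n * Lp n) * Y) * Rm n = (Lm n * X * Rp n) * (Lp n * Y * Rm n)"
    using dX dY by (simp add: assoc_d)
  also have "\<dots> = 0\<^sub>m n n" using LmXRp[OF X] dY by simp
  also have "Lm n * (X * (Rm n * Lm n) * Y) * Rm n = (Lm n * X * Rm n) * (Lm n * Y * Rm n)"
    using dX dY by (simp add: assoc_d)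
  finally have e: "Lm n * (X * Y) * Rm n = 0\<^sub>m n n + (Lm n * X * Rm n) * (Lm n * Y * Rm n)" .
  have "(Lm n * X * Rm n) * (Lm n * Y * Rm n) \<in> carrier_mat n n" using dX dY by (intro carrier_matI) simp_all
  then show ?thesis using e by (metis left_add_zero_mat)
qed

lemma r4m: "a \<in> carrier_mat r c \<Longrightarrow> b \<in> carrier_mat r c \<Longrightarrow> x \<in> carrier_mat r c \<Longrightarrow> d \<in> carrier_mat r c \<Longrightarrow>
  (a + b) - (x + d) = (a - x) + (b - (d :: complex mat))"
  by (rule eq_matI) auto
lemma r4p: "a \<in> carrier_mat r c \<Longrightarrow> b \<in> carrier_mat r c \<Longrightarrow> x \<in> carrier_mat r c \<Longrightarrow> d \<in> carrier_mat r c \<Longrightarrow>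
  (a + b) + (x + d) = (a + x) + (b + (d :: complex mat))"
  by (rule eq_matI) auto
lemma ntr_add: "A \<in> carrier_mat r c \<Longrightarrow> B \<in> carrier_mat r c \<Longrightarrow>
  - transpose_mat (A + B) = - transpose_mat A + - transpose_mat (B :: complex mat)"
  by (rule eq_matI) auto
lemma ntr_smult: "- transpose_mat (k \<cdot>\<^sub>m A) = k \<cdot>\<^sub>m (- transpose_mat (A :: complex mat))"
  by (rule eq_matI) auto
lemma ntr_comm: assumes "A \<in> carrier_mat m m" "B \<in> carrier_mat m m"
  shows "- transpose_mat (A * B - B * A) = commutator (- transpose_mat A) (- transpose_mat (B :: complex mat))"
proof -
  have "commutator (- transpose_mat A) (- transpose_mat B) = transpose_mat A * transpose_mat B - transpose_mat B * transpose_mat A"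
    using assms by (simp add: commutator_def)
  also have "\<dots> = transpose_mat (B * A) - transpose_mat (A * B)"
    using assms by (simp add: transpose_mult)
  also have "\<dots> = - transpose_mat (A * B - B * A)"
    using assms by (intro eq_matI) auto
  finally show ?thesis by simp
qed

definition Psi :: "nat \<Rightarrow> complex mat \<Rightarrow> complex mat \<times> complex mat" where
  "Psi n X = (- transpose_mat (Lp n * X * Rp n), - transpose_mat (Lm n * X * Rm n))"

definition Phi :: "nat \<Rightarrow> complex mat \<times> complex mat \<Rightarrow> complex mat" where
  "Phi n p = Rp n * (- transpose_mat (fst p)) * Lp n + Rm n * (- transpose_mat (snd p)) * Lm n"

lemma Psi_gsum: "inGt n X \<Longrightarrow> Psi n X \<in> gsum n"
  unfolding Psi_def gsum_def inGt_def by (auto intro!: carrier_matI)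

lemma Psi_add: assumes X: "inGt n X" and Y: "inGt n Y" shows "Psi n (X + Y) = padd (Psi n X) (Psi n Y)"
proof -
  have dX: "dim_row X = Suc (2*n)" "dim_col X = Suc (2*n)" and dY: "dim_row Y = Suc (2*n)" "dim_col Y = Suc (2*n)"
    using inGt_dims[OF X] inGt_dims[OF Y] by auto
  have 1: "Lp n * (X + Y) * Rp n = Lp n * X * Rp n + Lp n * Y * Rp n" using dX dY by (simp add: distl_d distr_d)
  have 2: "Lm n * (X + Y) * Rm n = Lm n * X * Rm n + Lm n * Y * Rm n" using dX dY by (simp add: distl_d distr_d)
  show ?thesis unfolding Psi_def padd_def fst_conv snd_conv 1 2
    using dX dY by (auto intro!: ntr_add carrier_matI)
qed

lemma Psi_smult: assumes X: "inGt n X" shows "Psi n (c \<cdot>\<^sub>m X) = psc c (Psi n X)"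
proof -
  have dX: "dim_row X = Suc (2*n)" "dim_col X = Suc (2*n)" using inGt_dims[OF X] by auto
  have 1: "Lp n * (c \<cdot>\<^sub>m X) * Rp n = c \<cdot>\<^sub>m (Lp n * X * Rp n)" using dX by (simp add: smultl_d smultr_d)
  have 2: "Lm n * (c \<cdot>\<^sub>m X) * Rm n = c \<cdot>\<^sub>m (Lm n * X * Rm n)" using dX by (simp add: smultl_d smultr_d)
  show ?thesis unfolding Psi_def psc_def fst_conv snd_conv 1 2 ntr_smult ..
qed

lemma Psi_br: assumes X: "inGt n X" and Y: "inGt n Y" shows "Psi n (commutator X Y) = pbr (Psi n X) (Psi n Y)"
proof -
  have dX: "dim_row X = Suc (2*n)" "dim_col X = Suc (2*n)" and dY: "dim_row Y = Suc (2*n)" "dim_col Y = Suc (2*n)"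
    using inGt_dims[OF X] inGt_dims[OF Y] by auto
  have 1: "Lp n * (X * Y - Y * X) * Rp n = Lp n * (X * Y) * Rp n - Lp n * (Y * X) * Rp n"
    using dX dY by (simp add: mdistl_d mdistr_d)
  have 2: "Lm n * (X * Y - Y * X) * Rm n = Lm n * (X * Y) * Rm n - Lm n * (Y * X) * Rm n"
    using dX dY by (simp add: mdistl_d mdistr_d)
  show ?thesis unfolding Psi_def pbr_def fst_conv snd_conv commutator_def[of X Y] 1 2
    LXYR_p[OF X Y] LXYR_p[OF Y X] LXYR_m[OF X Y] LXYR_m[OF Y X]
    using dX dY by (auto intro!: ntr_comm carrier_matI)
qed

lemma Phi_Psi: assumes X: "inGt n X" shows "Phi n (Psi n X) = X"
proof -
  have dX: "dim_row X = Suc (2*n)" "dim_col X = Suc (2*n)" using inGt_dims[OF X] by auto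
  let ?P = "Rp n * Lp n" and ?Q = "Rm n * Lm n"
  have "X = (?P + ?Q) * X * (?P + ?Q)" using dX by (simp only: RL) simp
  also have "\<dots> = (?P * X * ?P + ?Q * X * ?P) + (?P * X * ?Q + ?Q * X * ?Q)"
    using dX by (simp add: distl_d) (simp add: distr_d)
  also have "?Q * X * ?P = Rm n * (Lm n * X * Rp n) * Lp n" using dX by (simp add: assoc_d)
  also have "\<dots> = 0\<^sub>m (Suc (2*n)) (Suc (2*n))" using LmXRp[OF X] by simp
  also have "?P * X * ?Q = Rp n * (Lp n * X * Rm n) * Lm n" using dX by (simp add: assoc_d)
  also have "\<dots> = 0\<^sub>m (Suc (2*n)) (Suc (2*n))" using LpXRm[OF X] by simp
  also have "?P * X * ?P = Rp n * (Lp n * X * Rp n) * Lp n" using dX by (simp add: assoc_d)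
  also have "?Q * X * ?Q = Rm n * (Lm n * X * Rm n) * Lm n" using dX by (simp add: assoc_d)
  finally have e: "X = (Rp n * (Lp n * X * Rp n) * Lp n + 0\<^sub>m (Suc (2*n)) (Suc (2*n))) +
      (0\<^sub>m (Suc (2*n)) (Suc (2*n)) + Rm n * (Lm n * X * Rm n) * Lm n)" .
  have "Phi n (Psi n X) = Rp n * (Lp n * X * Rp n) * Lp n + Rm n * (Lm n * X * Rm n) * Lm n"
    unfolding Phi_def Psi_def by (simp add: transpose_uminus)
  also have "\<dots> = (Rp n * (Lp n * X * Rp n) * Lp n + 0\<^sub>m (Suc (2*n)) (Suc (2*n))) +
      (0\<^sub>m (Suc (2*n)) (Suc (2*n)) + Rm n * (Lm n * X * Rm n) * Lm n)"
    using dX by (intro eq_matI) auto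
  finally show ?thesis using e by simp
qed

lemma gsumD: "p \<in> gsum n \<Longrightarrow> fst p \<in> carrier_mat (Suc n) (Suc n) \<and> snd p \<in> carrier_mat n n"
  by (auto simp: gsum_def)

lemma Phi_gt: assumes p: "p \<in> gsum n" shows "inGt n (Phi n p)"
proof -
  let ?J = "Jm (Suc (2*n))"
  define A where "A = - transpose_mat (fst p)"
  define B where "B = - transpose_mat (snd p)"
  have A: "A \<in> carrier_mat (Suc n) (Suc n)" and B: "B \<in> carrier_mat n n" using gsumD[OF p] by (auto simp: A_def B_def)
  have ph: "Phi n p = Rp n * A * Lp n + Rm n * B * Lm n" by (simp add: Phi_def A_def B_def)
  have "?J * (Rp n * A * Lp n + Rm n * B * Lm n) * ?J = ?J * (Rp n * A * Lp n) * ?J + ?J * (Rm n * B * Lm n) * ?J"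
    using A B by (simp add: distl_d) (simp add: distr_d)
  also have "?J * (Rp n * A * Lp n) * ?J = (?J * Rp n) * A * (Lp n * ?J)" using A by (simp add: assoc_d)
  also have "\<dots> = Rp n * A * Lp n" using JRp[of n] LpJ[of n] by simp
  also have "?J * (Rm n * B * Lm n) * ?J = (?J * Rm n) * B * (Lm n * ?J)" using B by (simp add: assoc_d)
  also have "\<dots> = Rm n * B * Lm n" using JRm[of n] LmJ[of n] B by simp
  finally have "?J * Phi n p * ?J = Phi n p" unfolding ph .
  moreover have "Phi n p \<in> carrier_mat (Suc (2*n)) (Suc (2*n))" unfolding ph using A B by (intro carrier_matI) auto
  ultimately show ?thesis by (simp add: inGt_def)
qed

lemma Phi_add: assumes p: "p \<in> gsum n" and q: "q \<in> gsum n" shows "Phi n (padd p q) = Phi n p + Phi n q"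
proof -
  define A1 where "A1 = - transpose_mat (fst p)"
  define B1 where "B1 = - transpose_mat (snd p)"
  define A2 where "A2 = - transpose_mat (fst q)"
  define B2 where "B2 = - transpose_mat (snd q)"
  have c: "A1 \<in> carrier_mat (Suc n) (Suc n)" "B1 \<in> carrier_mat n n" "A2 \<in> carrier_mat (Suc n) (Suc n)" "B2 \<in> carrier_mat n n"
    using gsumD[OF p] gsumD[OF q] by (auto simp: A1_def B1_def A2_def B2_def)
  have e1: "- transpose_mat (fst p + fst q) = A1 + A2" unfolding A1_def A2_def using gsumD[OF p] gsumD[OF q] by (intro ntr_add) auto
  have e2: "- transpose_mat (snd p + snd q) = B1 + B2" unfolding B1_def B2_def using gsumD[OF p] gsumD[OF q] by (intro ntr_add) auto
  have "Phi n (padd p q) = Rp n * (A1 + A2) * Lp n + Rm n * (B1 + B2) * Lm n"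
    by (simp add: Phi_def padd_def e1 e2)
  also have "\<dots> = (Rp n * A1 * Lp n + Rp n * A2 * Lp n) + (Rm n * B1 * Lm n + Rm n * B2 * Lm n)"
    using c by (simp add: distl_d distr_d)
  also have "\<dots> = (Rp n * A1 * Lp n + Rm n * B1 * Lm n) + (Rp n * A2 * Lp n + Rm n * B2 * Lm n)"
    using c by (intro r4p[where r="Suc (2*n)" and c="Suc (2*n)"] carrier_matI) auto
  also have "\<dots> = Phi n p + Phi n q" by (simp add: Phi_def A1_def B1_def A2_def B2_def)
  finally show ?thesis .
qed

lemma Phi_smult: assumes p: "p \<in> gsum n" shows "Phi n (psc c p) = c \<cdot>\<^sub>m Phi n p"
proof -
  define A1 where "A1 = - transpose_mat (fst p)"
  define B1 where "B1 = - transpose_mat (snd p)"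
  have cc: "A1 \<in> carrier_mat (Suc n) (Suc n)" "B1 \<in> carrier_mat n n"
    using gsumD[OF p] by (auto simp: A1_def B1_def)
  have "Phi n (psc c p) = Rp n * (c \<cdot>\<^sub>m A1) * Lp n + Rm n * (c \<cdot>\<^sub>m B1) * Lm n"
    by (simp add: Phi_def psc_def ntr_smult A1_def B1_def)
  also have "\<dots> = c \<cdot>\<^sub>m (Rp n * A1 * Lp n) + c \<cdot>\<^sub>m (Rm n * B1 * Lm n)"
    using cc by (simp add: smultl_d smultr_d)
  also have "\<dots> = c \<cdot>\<^sub>m (Rp n * A1 * Lp n + Rm n * B1 * Lm n)"
    using cc by (intro eq_matI) (auto simp: algebra_simps)
  also have "\<dots> = c \<cdot>\<^sub>m Phi n p" by (simp add: Phi_def A1_def B1_def)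
  finally show ?thesis .
qed

lemma prod4: assumes c: "A \<in> carrier_mat (Suc n) (Suc n)" "B \<in> carrier_mat n n" "C \<in> carrier_mat (Suc n) (Suc n)" "D \<in> carrier_mat n n"
  shows "(Rp n * A * Lp n + Rm n * B * Lm n) * (Rp n * C * Lp n + Rm n * D * Lm n) = Rp n * (A * C) * Lp n + Rm n * (B * D) * Lm n"
proof -
  let ?Z = "0\<^sub>m (Suc (2*n)) (Suc (2*n))"
  have "(Rp n * A * Lp n + Rm n * B * Lm n) * (Rp n * C * Lp n + Rm n * D * Lm n) =
     ((Rp n * A * Lp n) * (Rp n * C * Lp n) + (Rm n * B * Lm n) * (Rp n * C * Lp n)) +
     ((Rp n * A * Lp n) * (Rm n * D * Lm n) + (Rm n * B * Lm n) * (Rm n * D * Lm n))"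
    using c by (simp add: distl_d) (simp add: distr_d)
  also have "(Rp n * A * Lp n) * (Rp n * C * Lp n) = Rp n * (A * (Lp n * Rp n) * C) * Lp n" using c by (simp add: assoc_d)
  also have "\<dots> = Rp n * (A * C) * Lp n" using c by (simp add: LpRp)
  also have "(Rm n * B * Lm n) * (Rp n * C * Lp n) = Rm n * (B * (Lm n * Rp n) * C) * Lp n" using c by (simp add: assoc_d)
  also have "\<dots> = ?Z" using c by (simp add: LmRp)
  also have "(Rp n * A * Lp n) * (Rm n * D * Lm n) = Rp n * (A * (Lp n * Rm n) * D) * Lm n" using c by (simp add: assoc_d)
  also have "\<dots> = ?Z" using c by (simp add: LpRm)
  also have "(Rm n * B * Lm n) * (Rm n * D * Lm n) = Rm n * (B * (Lm n * Rm n) * D) * Lm n" using c by (simp add: assoc_d)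
  also have "\<dots> = Rm n * (B * D) * Lm n" using c by (simp add: LmRm)
  also have "(Rp n * (A * C) * Lp n + ?Z) + (?Z + Rm n * (B * D) * Lm n) = Rp n * (A * C) * Lp n + Rm n * (B * D) * Lm n"
    using c by (intro eq_matI) auto
  finally show ?thesis .
qed

lemma Phi_br: assumes p: "p \<in> gsum n" and q: "q \<in> gsum n" shows "Phi n (pbr p q) = commutator (Phi n p) (Phi n q)"
proof -
  define A1 where "A1 = - transpose_mat (fst p)"
  define B1 where "B1 = - transpose_mat (snd p)"
  define A2 where "A2 = - transpose_mat (fst q)"
  define B2 where "B2 = - transpose_mat (snd q)"
  have c: "A1 \<in> carrier_mat (Suc n) (Suc n)" "B1 \<in> carrier_mat n n" "A2 \<in> carrier_mat (Suc n) (Suc n)" "B2 \<in> carrier_mat n n"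
    using gsumD[OF p] gsumD[OF q] by (auto simp: A1_def B1_def A2_def B2_def)
  have e1: "- transpose_mat (commutator (fst p) (fst q)) = A1 * A2 - A2 * A1"
    unfolding A1_def A2_def commutator_def using gsumD[OF p] gsumD[OF q] by (intro ntr_comm[unfolded commutator_def]) auto
  have e2: "- transpose_mat (commutator (snd p) (snd q)) = B1 * B2 - B2 * B1"
    unfolding B1_def B2_def commutator_def using gsumD[OF p] gsumD[OF q] by (intro ntr_comm[unfolded commutator_def]) auto
  have pp: "Phi n p = Rp n * A1 * Lp n + Rm n * B1 * Lm n" and qq: "Phi n q = Rp n * A2 * Lp n + Rm n * B2 * Lm n"
    by (simp_all add: Phi_def A1_def B1_def A2_def B2_def)
  have "Phi n (pbr p q) = Rp n * (A1 * A2 - A2 * A1) * Lp n + Rm n * (B1 * B2 - B2 * B1) * Lm n"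
    by (simp add: Phi_def pbr_def e1 e2)
  also have "\<dots> = (Rp n * (A1 * A2) * Lp n - Rp n * (A2 * A1) * Lp n) + (Rm n * (B1 * B2) * Lm n - Rm n * (B2 * B1) * Lm n)"
    using c by (simp add: mdistl_d mdistr_d)
  also have "\<dots> = (Rp n * (A1 * A2) * Lp n + Rm n * (B1 * B2) * Lm n) - (Rp n * (A2 * A1) * Lp n + Rm n * (B2 * B1) * Lm n)"
    using c by (intro eq_matI) auto
  also have "\<dots> = commutator (Phi n p) (Phi n q)"
    unfolding commutator_def pp qq prod4[OF c] prod4[OF c(3,4,1,2)] ..
  finally show ?thesis .
qed



lemma Eu_c[simp]: "Eu N a b \<in> carrier_mat N N" by (simp add: Eu_def)
lemma Eu_dims[simp]: "dim_row (Eu N a b) = N" "dim_col (Eu N a b) = N" by (simp_all add: Eu_def)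

lemma LER: assumes L: "L \<in> carrier_mat r N" and R: "R \<in> carrier_mat N c" and ab: "1 \<le> a" "a \<le> N" "1 \<le> b" "b \<le> N"
  shows "L * Eu N a b * R = mat r c (\<lambda>(k,j). L $$ (k,a-1) * R $$ (b-1,j))"
proof (rule eq_matI)
  fix k j assume kj: "k < dim_row (mat r c (\<lambda>(k,j). L $$ (k,a-1) * R $$ (b-1,j)))" "j < dim_col (mat r c (\<lambda>(k,j). L $$ (k,a-1) * R $$ (b-1,j)))"
  then have kj': "k < r" "j < c" by auto
  have LE: "L * Eu N a b \<in> carrier_mat r N" using L by simp
  have "(L * Eu N a b * R) $$ (k,j) = (\<Sum>t=0..<N. (L * Eu N a b) $$ (k,t) * R $$ (t,j))"
    using kj' by (intro mult_entry[OF LE R])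
  also have "\<dots> = (L * Eu N a b) $$ (k,b-1) * R $$ (b-1,j)"
  proof (rule sum_supp1)
    show "b - 1 < N" using ab by auto
    fix t assume t: "t < N" "t \<noteq> b - 1"
    have "(L * Eu N a b) $$ (k,t) = (\<Sum>s=0..<N. L $$ (k,s) * Eu N a b $$ (s,t))"
      using kj' t by (intro mult_entry[OF L]) auto
    also have "\<dots> = 0" using t by (intro sum_supp0) (auto simp: Eu_def)
    finally show "(L * Eu N a b) $$ (k,t) * R $$ (t,j) = 0" by simp
  qed
  also have "(L * Eu N a b) $$ (k,b-1) = (\<Sum>s=0..<N. L $$ (k,s) * Eu N a b $$ (s,b-1))"
    using kj' ab by (intro mult_entry[OF L]) auto
  also have "\<dots> = L $$ (k,a-1) * Eu N a b $$ (a-1,b-1)"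
    using ab by (intro sum_supp1) (auto simp: Eu_def)
  also have "\<dots> = L $$ (k,a-1)" using ab by (simp add: Eu_def)
  finally show "(L * Eu N a b * R) $$ (k,j) = mat r c (\<lambda>(k,j). L $$ (k,a-1) * R $$ (b-1,j)) $$ (k,j)"
    using kj' by simp
qed (use L R in auto)

lemma L2R: assumes L: "L \<in> carrier_mat r N" and R: "R \<in> carrier_mat N c" and ab: "1 \<le> a" "a \<le> N" "1 \<le> b" "b \<le> N"
  and ab2: "1 \<le> a2" "a2 \<le> N" "1 \<le> b2" "b2 \<le> N"
  shows "L * (Eu N a b + Eu N a2 b2) * R = mat r c (\<lambda>(k,j). L $$ (k,a-1) * R $$ (b-1,j) + L $$ (k,a2-1) * R $$ (b2-1,j))"
proof -
  have "L * (Eu N a b + Eu N a2 b2) * R = L * Eu N a b * R + L * Eu N a2 b2 * R"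
    using L R by (simp add: distl_d distr_d)
  also have "\<dots> = mat r c (\<lambda>(k,j). L $$ (k,a-1) * R $$ (b-1,j) + L $$ (k,a2-1) * R $$ (b2-1,j))"
    unfolding LER[OF L R ab] LER[OF L R ab2] by (intro eq_matI) auto
  finally show ?thesis .
qed

lemma Lp_lo: "k < Suc n \<Longrightarrow> a < n \<Longrightarrow> Lp n $$ (k,a) = (if k = a then (-1)^a / 2 else 0)"
  by (auto simp: Lp_def)
lemma Lp_hi: "k < Suc n \<Longrightarrow> n < a \<Longrightarrow> a \<le> 2*n \<Longrightarrow> Lp n $$ (k,a) = (if k = 2*n-a then (-1)^k / 2 else 0)"
  by (auto simp: Lp_def)
lemma Lp_mid: "k < Suc n \<Longrightarrow> Lp n $$ (k,n) = (if k = n then (-1)^n / 2 else 0)"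
  by (auto simp: Lp_def)
lemma Rp_lo: "k < Suc n \<Longrightarrow> a < n \<Longrightarrow> Rp n $$ (a,k) = (if k = a then (-1)^a else 0)"
  by (auto simp: Rp_def)
lemma Rp_hi: "k < Suc n \<Longrightarrow> n < a \<Longrightarrow> a \<le> 2*n \<Longrightarrow> Rp n $$ (a,k) = (if k = 2*n-a then (-1)^k else 0)"
  by (auto simp: Rp_def)
lemma Rp_mid: "k < Suc n \<Longrightarrow> Rp n $$ (n,k) = (if k = n then 2 * (-1)^n else 0)"
  by (auto simp: Rp_def)
lemma Lm_lo: "k < n \<Longrightarrow> a < n \<Longrightarrow> Lm n $$ (k,a) = (if k = a then (-1)^a / 2 else 0)"
  by (auto simp: Lm_def)
lemma Lm_hi: "k < n \<Longrightarrow> n < a \<Longrightarrow> a \<le> 2*n \<Longrightarrow> Lm n $$ (k,a) = (if k = 2*n-a then - ((-1)^k / 2) else 0)"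
  by (auto simp: Lm_def)
lemma Lm_mid: "k < n \<Longrightarrow> Lm n $$ (k,n) = 0"
  by (auto simp: Lm_def)
lemma Rm_lo: "k < n \<Longrightarrow> a < n \<Longrightarrow> Rm n $$ (a,k) = (if k = a then (-1)^a else 0)"
  by (auto simp: Rm_def)
lemma Rm_hi: "k < n \<Longrightarrow> n < a \<Longrightarrow> a \<le> 2*n \<Longrightarrow> Rm n $$ (a,k) = (if k = 2*n-a then - ((-1)^k) else 0)"
  by (auto simp: Rm_def)
lemma Rm_mid: "k < n \<Longrightarrow> Rm n $$ (n,k) = 0"
  by (auto simp: Rm_def)
lemma m1pow: "1 \<le> i \<Longrightarrow> (-1::complex)^(i-1) * (-1)^i = -1"
  "1 \<le> i \<Longrightarrow> (-1::complex)^i * (-1)^(i-1) = -1"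
  "1 \<le> i \<Longrightarrow> (-1::complex)^(i-Suc 0) * (-1)^i = -1"
  "1 \<le> i \<Longrightarrow> (-1::complex)^i * (-1)^(i-Suc 0) = -1"
  by (cases i; simp)+

lemma Psi_be: assumes "1 \<le> i" "i < n" shows "Psi n (be n i) = padd (cf n i) (cfb n i)"
proof -
  have 1: "Lp n * be n i * Rp n = mat (Suc n) (Suc n) (\<lambda>(k,j). Lp n $$ (k,i-1) * Rp n $$ (i,j) + Lp n $$ (k,2*n+1-i) * Rp n $$ (2*n-i,j))"
    unfolding be_def using assms by (subst L2R) auto
  have 2: "Lm n * be n i * Rm n = mat n n (\<lambda>(k,j). Lm n $$ (k,i-1) * Rm n $$ (i,j) + Lm n $$ (k,2*n+1-i) * Rm n $$ (2*n-i,j))"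
    unfolding be_def using assms by (subst L2R) auto
  show ?thesis unfolding Psi_def 1 2 padd_def cf_def cfb_def fst_conv snd_conv prod.inject
  proof (intro conjI eq_matI)
    fix k j assume kj: "k < dim_row (Eu (n + 1) (i + 1) i + 0\<^sub>m (n + 1) (n + 1))" "j < dim_col (Eu (n + 1) (i + 1) i + 0\<^sub>m (n + 1) (n + 1))"
    then have kj': "k < Suc n" "j < Suc n" by auto
    show "(- (mat (Suc n) (Suc n) (\<lambda>(k,j). Lp n $$ (k,i-1) * Rp n $$ (i,j) + Lp n $$ (k,2*n+1-i) * Rp n $$ (2*n-i,j)))\<^sup>T) $$ (k,j)
       = (Eu (n + 1) (i + 1) i + 0\<^sub>m (n + 1) (n + 1)) $$ (k,j)"
      using kj' assms by (simp add: Lp_lo Lp_hi Rp_lo Rp_hi m1pow Eu_def)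
  next
    fix k j assume kj: "k < dim_row (0\<^sub>m n n + Eu n (i + 1) i)" "j < dim_col (0\<^sub>m n n + Eu n (i + 1) i)"
    then have kj': "k < n" "j < n" by auto
    show "(- (mat n n (\<lambda>(k,j). Lm n $$ (k,i-1) * Rm n $$ (i,j) + Lm n $$ (k,2*n+1-i) * Rm n $$ (2*n-i,j)))\<^sup>T) $$ (k,j)
       = (0\<^sub>m n n + Eu n (i + 1) i) $$ (k,j)"
      using kj' assms by (simp add: Lm_lo Lm_hi Rm_lo Rm_hi m1pow Eu_def)
  qed auto
qed

lemma m1sq: "(-1::complex)^k * (-1)^k = 1" by (simp add: power_add[symmetric])

lemma Psi_bf: assumes "1 \<le> i" "i < n" shows "Psi n (bf n i) = padd (ce n i) (ceb n i)"
proof -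
  have 1: "Lp n * bf n i * Rp n = mat (Suc n) (Suc n) (\<lambda>(k,j). Lp n $$ (k,i) * Rp n $$ (i-1,j) + Lp n $$ (k,2*n-i) * Rp n $$ (2*n+1-i,j))"
    unfolding bf_def using assms by (subst L2R) auto
  have 2: "Lm n * bf n i * Rm n = mat n n (\<lambda>(k,j). Lm n $$ (k,i) * Rm n $$ (i-1,j) + Lm n $$ (k,2*n-i) * Rm n $$ (2*n+1-i,j))"
    unfolding bf_def using assms by (subst L2R) auto
  show ?thesis unfolding Psi_def 1 2 padd_def ce_def ceb_def fst_conv snd_conv prod.inject
  proof (intro conjI eq_matI)
    fix k j assume kj: "k < dim_row (Eu (n + 1) i (i + 1) + 0\<^sub>m (n + 1) (n + 1))" "j < dim_col (Eu (n + 1) i (i + 1) + 0\<^sub>m (n + 1) (n + 1))"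
    then have kj': "k < Suc n" "j < Suc n" by auto
    show "(- (mat (Suc n) (Suc n) (\<lambda>(k,j). Lp n $$ (k,i) * Rp n $$ (i-1,j) + Lp n $$ (k,2*n-i) * Rp n $$ (2*n+1-i,j)))\<^sup>T) $$ (k,j)
       = (Eu (n + 1) i (i + 1) + 0\<^sub>m (n + 1) (n + 1)) $$ (k,j)"
      using kj' assms by (simp add: Lp_lo Lp_hi Rp_lo Rp_hi m1pow Eu_def)
  next
    fix k j assume kj: "k < dim_row (0\<^sub>m n n + Eu n i (i + 1))" "j < dim_col (0\<^sub>m n n + Eu n i (i + 1))"
    then have kj': "k < n" "j < n" by auto
    show "(- (mat n n (\<lambda>(k,j). Lm n $$ (k,i) * Rm n $$ (i-1,j) + Lm n $$ (k,2*n-i) * Rm n $$ (2*n+1-i,j)))\<^sup>T) $$ (k,j)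
       = (0\<^sub>m n n + Eu n i (i + 1)) $$ (k,j)"
      using kj' assms by (simp add: Lm_lo Lm_hi Rm_lo Rm_hi m1pow Eu_def)
  qed auto
qed

lemma Psi_ben: assumes "1 \<le> n" shows "Psi n (be n n) = psc 2 (cf n n)"
proof -
  have 1: "Lp n * be n n * Rp n = mat (Suc n) (Suc n) (\<lambda>(k,j). Lp n $$ (k,n-1) * Rp n $$ (n,j) + Lp n $$ (k,n+1) * Rp n $$ (n,j))"
    unfolding be_def using assms by (subst L2R) auto
  have 2: "Lm n * be n n * Rm n = mat n n (\<lambda>(k,j). Lm n $$ (k,n-1) * Rm n $$ (n,j) + Lm n $$ (k,n+1) * Rm n $$ (n,j))"
    unfolding be_def using assms by (subst L2R) auto
  show ?thesis unfolding Psi_def 1 2 psc_def cf_def fst_conv snd_conv prod.inject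
  proof (intro conjI eq_matI)
    fix k j assume kj: "k < dim_row (2 \<cdot>\<^sub>m Eu (n + 1) (n + 1) n)" "j < dim_col (2 \<cdot>\<^sub>m Eu (n + 1) (n + 1) n)"
    then have kj': "k < Suc n" "j < Suc n" by auto
    show "(- (mat (Suc n) (Suc n) (\<lambda>(k,j). Lp n $$ (k,n-1) * Rp n $$ (n,j) + Lp n $$ (k,n+1) * Rp n $$ (n,j)))\<^sup>T) $$ (k,j)
       = (2 \<cdot>\<^sub>m Eu (n + 1) (n + 1) n) $$ (k,j)"
      using kj' assms by (simp add: Lp_lo Lp_hi Rp_mid m1pow Eu_def)
  next
    fix k j assume kj: "k < dim_row (2 \<cdot>\<^sub>m 0\<^sub>m n n :: complex mat)" "j < dim_col (2 \<cdot>\<^sub>m 0\<^sub>m n n :: complex mat)"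
    then have kj': "k < n" "j < n" by auto
    show "(- (mat n n (\<lambda>(k,j). Lm n $$ (k,n-1) * Rm n $$ (n,j) + Lm n $$ (k,n+1) * Rm n $$ (n,j)))\<^sup>T) $$ (k,j)
       = (2 \<cdot>\<^sub>m 0\<^sub>m n n :: complex mat) $$ (k,j)"
      using kj' assms by (simp add: Rm_mid)
  qed auto
qed

lemma Psi_bfn: assumes "1 \<le> n" shows "Psi n (bf n n) = ce n n"
proof -
  have 1: "Lp n * bf n n * Rp n = mat (Suc n) (Suc n) (\<lambda>(k,j). Lp n $$ (k,n) * Rp n $$ (n-1,j) + Lp n $$ (k,n) * Rp n $$ (n+1,j))"
    unfolding bf_def using assms by (subst L2R) auto
  have 2: "Lm n * bf n n * Rm n = mat n n (\<lambda>(k,j). Lm n $$ (k,n) * Rm n $$ (n-1,j) + Lm n $$ (k,n) * Rm n $$ (n+1,j))"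
    unfolding bf_def using assms by (subst L2R) auto
  show ?thesis unfolding Psi_def 1 2 ce_def prod.inject
  proof (intro conjI eq_matI)
    fix k j assume kj: "k < dim_row (Eu (n + 1) n (n + 1))" "j < dim_col (Eu (n + 1) n (n + 1))"
    then have kj': "k < Suc n" "j < Suc n" by auto
    show "(- (mat (Suc n) (Suc n) (\<lambda>(k,j). Lp n $$ (k,n) * Rp n $$ (n-1,j) + Lp n $$ (k,n) * Rp n $$ (n+1,j)))\<^sup>T) $$ (k,j)
       = (Eu (n + 1) n (n + 1)) $$ (k,j)"
      using kj' assms by (simp add: Lp_mid Rp_lo Rp_hi m1pow Eu_def)
  next
    fix k j assume kj: "k < dim_row (0\<^sub>m n n :: complex mat)" "j < dim_col (0\<^sub>m n n :: complex mat)"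
    then have kj': "k < n" "j < n" by auto
    show "(- (mat n n (\<lambda>(k,j). Lm n $$ (k,n) * Rm n $$ (n-1,j) + Lm n $$ (k,n) * Rm n $$ (n+1,j)))\<^sup>T) $$ (k,j)
       = (0\<^sub>m n n :: complex mat) $$ (k,j)"
      using kj' assms by (simp add: Lm_mid)
  qed auto
qed

lemma Psi_bd: assumes "1 \<le> i" "i \<le> n" shows "Psi n (bd n i) = psc (-1) (padd (ch n i) (chb n i))"
proof -
  have 1: "Lp n * bd n i * Rp n = mat (Suc n) (Suc n) (\<lambda>(k,j). Lp n $$ (k,i-1) * Rp n $$ (i-1,j) + Lp n $$ (k,2*n+1-i) * Rp n $$ (2*n+1-i,j))"
    using assms by (simp only: bd_def if_not_P) (subst L2R; auto)
  have 2: "Lm n * bd n i * Rm n = mat n n (\<lambda>(k,j). Lm n $$ (k,i-1) * Rm n $$ (i-1,j) + Lm n $$ (k,2*n+1-i) * Rm n $$ (2*n+1-i,j))"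
    using assms by (simp only: bd_def if_not_P) (subst L2R; auto)
  show ?thesis unfolding Psi_def 1 2 psc_def padd_def ch_def chb_def fst_conv snd_conv prod.inject
  proof (intro conjI eq_matI)
    fix k j assume kj: "k < dim_row (-1 \<cdot>\<^sub>m (Eu (n + 1) i i + 0\<^sub>m (n + 1) (n + 1)))" "j < dim_col (-1 \<cdot>\<^sub>m (Eu (n + 1) i i + 0\<^sub>m (n + 1) (n + 1)))"
    then have kj': "k < Suc n" "j < Suc n" by auto
    show "(- (mat (Suc n) (Suc n) (\<lambda>(k,j). Lp n $$ (k,i-1) * Rp n $$ (i-1,j) + Lp n $$ (k,2*n+1-i) * Rp n $$ (2*n+1-i,j)))\<^sup>T) $$ (k,j)
       = (-1 \<cdot>\<^sub>m (Eu (n + 1) i i + 0\<^sub>m (n + 1) (n + 1))) $$ (k,j)"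
      using kj' assms by (simp add: Lp_lo Lp_hi Rp_lo Rp_hi m1sq Eu_def)
  next
    fix k j assume kj: "k < dim_row (-1 \<cdot>\<^sub>m (0\<^sub>m n n + Eu n i i))" "j < dim_col (-1 \<cdot>\<^sub>m (0\<^sub>m n n + Eu n i i))"
    then have kj': "k < n" "j < n" by auto
    show "(- (mat n n (\<lambda>(k,j). Lm n $$ (k,i-1) * Rm n $$ (i-1,j) + Lm n $$ (k,2*n+1-i) * Rm n $$ (2*n+1-i,j)))\<^sup>T) $$ (k,j)
       = (-1 \<cdot>\<^sub>m (0\<^sub>m n n + Eu n i i)) $$ (k,j)"
      using kj' assms by (simp add: Lm_lo Lm_hi Rm_lo Rm_hi m1sq Eu_def)
  qed auto
qed

lemma Psi_bdn: "Psi n (bd n (n+1)) = psc (-2) (ch n (n+1))"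
proof -
  have 1: "Lp n * bd n (n+1) * Rp n = 2 \<cdot>\<^sub>m mat (Suc n) (Suc n) (\<lambda>(k,j). Lp n $$ (k,n) * Rp n $$ (n,j))"
    unfolding bd_def by (simp add: smultl_d smultr_d LER[OF cS(2) cS(1)])
  have 2: "Lm n * bd n (n+1) * Rm n = 2 \<cdot>\<^sub>m mat n n (\<lambda>(k,j). Lm n $$ (k,n) * Rm n $$ (n,j))"
    unfolding bd_def by (simp add: smultl_d smultr_d LER[OF cS(4) cS(3)])
  show ?thesis unfolding Psi_def 1 2 psc_def ch_def fst_conv snd_conv prod.inject
  proof (intro conjI eq_matI)
    fix k j assume kj: "k < dim_row (-2 \<cdot>\<^sub>m Eu (n + 1) (n + 1) (n + 1))" "j < dim_col (-2 \<cdot>\<^sub>m Eu (n + 1) (n + 1) (n + 1))"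
    then have kj': "k < Suc n" "j < Suc n" by auto
    show "(- (2 \<cdot>\<^sub>m mat (Suc n) (Suc n) (\<lambda>(k,j). Lp n $$ (k,n) * Rp n $$ (n,j)))\<^sup>T) $$ (k,j)
       = (-2 \<cdot>\<^sub>m Eu (n + 1) (n + 1) (n + 1)) $$ (k,j)"
      using kj' by (simp add: Lp_mid Rp_mid m1sq Eu_def)
  next
    fix k j assume kj: "k < dim_row (-2 \<cdot>\<^sub>m 0\<^sub>m n n :: complex mat)" "j < dim_col (-2 \<cdot>\<^sub>m 0\<^sub>m n n :: complex mat)"
    then have kj': "k < n" "j < n" by auto
    show "(- (2 \<cdot>\<^sub>m mat n n (\<lambda>(k,j). Lm n $$ (k,n) * Rm n $$ (n,j)))\<^sup>T) $$ (k,j)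
       = (-2 \<cdot>\<^sub>m 0\<^sub>m n n :: complex mat) $$ (k,j)"
      using kj' by (simp add: Lm_mid)
  qed auto
qed

lemma JEJ: assumes "1 \<le> a" "a \<le> N" "1 \<le> b" "b \<le> N"
  shows "Jm N * Eu N a b * Jm N = Eu N (N+1-a) (N+1-b)"
  unfolding LER[OF J_c J_c assms] using assms by (intro eq_matI) (auto simp: Jm_def Eu_def)

lemma inGt_pair: assumes "1 \<le> a" "a \<le> 2*n+1" "1 \<le> b" "b \<le> 2*n+1"
  shows "inGt n (Eu (2*n+1) a b + Eu (2*n+1) (2*n+2-a) (2*n+2-b))"
proof -
  let ?N = "2*n+1"
  have "Jm ?N * (Eu ?N a b + Eu ?N (2*n+2-a) (2*n+2-b)) * Jm ?N = Jm ?N * Eu ?N a b * Jm ?N + Jm ?N * Eu ?N (2*n+2-a) (2*n+2-b) * Jm ?N"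
    by (simp add: distl_d distr_d)
  also have "\<dots> = Eu ?N (2*n+2-a) (2*n+2-b) + Eu ?N a b"
    using assms by (simp add: JEJ)
  also have "\<dots> = Eu ?N a b + Eu ?N (2*n+2-a) (2*n+2-b)"
    by (rule comm_add_mat) auto
  finally show ?thesis by (simp add: inGt_def)
qed

lemma inGt_be: "1 \<le> i \<Longrightarrow> i \<le> n \<Longrightarrow> inGt n (be n i)"
  unfolding be_def using inGt_pair[of i n "i+1"] by (simp add: Suc_diff_le)
lemma inGt_bf: "1 \<le> i \<Longrightarrow> i \<le> n \<Longrightarrow> inGt n (bf n i)"
  unfolding bf_def using inGt_pair[of "i+1" n i] by (simp add: Suc_diff_le)
lemma inGt_bd: "1 \<le> i \<Longrightarrow> i \<le> n \<Longrightarrow> inGt n (bd n i)"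
  unfolding bd_def using inGt_pair[of i n i] by simp
lemma inGt_bdn: "inGt n (bd n (n+1))"
proof -
  have "Jm (2*n+1) * (2 \<cdot>\<^sub>m Eu (2*n+1) (n+1) (n+1)) * Jm (2*n+1) = 2 \<cdot>\<^sub>m (Jm (2*n+1) * Eu (2*n+1) (n+1) (n+1) * Jm (2*n+1))"
    by (simp add: smultl_d smultr_d)
  also have "\<dots> = 2 \<cdot>\<^sub>m Eu (2*n+1) (n+1) (n+1)" by (subst JEJ) auto
  finally show ?thesis unfolding bd_def by (simp add: inGt_def)
qed



definition uu :: "nat \<Rightarrow> nat \<Rightarrow> nat \<Rightarrow> complex mat" where
  "uu m a b = mat m m (\<lambda>(i,j). if i = a \<and> j = b then 1 else 0)"

lemma uu_c[simp]: "uu m a b \<in> carrier_mat m m" by (simp add: uu_def)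
lemma uu_dims[simp]: "dim_row (uu m a b) = m" "dim_col (uu m a b) = m" by (simp_all add: uu_def)

lemma Eu_uu: "1 \<le> a \<Longrightarrow> 1 \<le> b \<Longrightarrow> Eu m a b = uu m (a-1) (b-1)"
  by (simp add: Eu_def uu_def)

lemma uu_comm: "a < m \<Longrightarrow> b < m \<Longrightarrow> c < m \<Longrightarrow> d < m \<Longrightarrow> commutator (uu m a b) (uu m c d) =
  mat m m (\<lambda>(i,j). (if i = a \<and> j = d \<and> b = c then 1 else 0) - (if i = c \<and> j = b \<and> d = a then 1 else 0))"
proof (rule eq_matI)
  fix i j assume abcd: "a < m" "b < m" "c < m" "d < m"
    and ij: "i < dim_row (mat m m (\<lambda>(i,j). (if i = a \<and> j = d \<and> b = c then 1 else 0) - (if i = c \<and> j = b \<and> d = a then 1 else (0::complex))))"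
      "j < dim_col (mat m m (\<lambda>(i,j). (if i = a \<and> j = d \<and> b = c then 1 else 0) - (if i = c \<and> j = b \<and> d = a then 1 else (0::complex))))"
  then have ij': "i < m" "j < m" by auto
  have 1: "(uu m a b * uu m c d) $$ (i,j) = (if i = a \<and> j = d \<and> b = c then 1 else 0)"
  proof -
    have "(uu m a b * uu m c d) $$ (i,j) = (\<Sum>t=0..<m. uu m a b $$ (i,t) * uu m c d $$ (t,j))"
      using ij' by (intro mult_entry[OF uu_c uu_c])
    also have "\<dots> = uu m a b $$ (i,b) * uu m c d $$ (b,j)"
      using abcd ij' by (intro sum_supp1) (auto simp: uu_def)
    finally show ?thesis using abcd ij' by (auto simp: uu_def)
  qed
  have 2: "(uu m c d * uu m a b) $$ (i,j) = (if i = c \<and> j = b \<and> d = a then 1 else 0)"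
  proof -
    have "(uu m c d * uu m a b) $$ (i,j) = (\<Sum>t=0..<m. uu m c d $$ (i,t) * uu m a b $$ (t,j))"
      using ij' by (intro mult_entry[OF uu_c uu_c])
    also have "\<dots> = uu m c d $$ (i,d) * uu m a b $$ (d,j)"
      using abcd ij' by (intro sum_supp1) (auto simp: uu_def)
    finally show ?thesis using abcd ij' by (auto simp: uu_def)
  qed
  show "commutator (uu m a b) (uu m c d) $$ (i,j) = mat m m (\<lambda>(i,j). (if i = a \<and> j = d \<and> b = c then 1 else 0) - (if i = c \<and> j = b \<and> d = a then 1 else 0)) $$ (i,j)"
    using ij' 1 2 by (simp add: commutator_def)
qed (auto simp: commutator_def)

lemma comm_chain: "a < m \<Longrightarrow> b < m \<Longrightarrow> c < m \<Longrightarrow> a \<noteq> c \<Longrightarrow> commutator (uu m a b) (uu m b c) = uu m a c"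
  by (subst uu_comm) (auto simp: uu_def intro!: eq_matI)

lemma comm_diag: "a < m \<Longrightarrow> b < m \<Longrightarrow> a \<noteq> b \<Longrightarrow> commutator (uu m a b) (uu m b a) = uu m a a - uu m b b"
  by (subst uu_comm) (auto simp: uu_def intro!: eq_matI)

lemma gen1:
  assumes m: "1 \<le> m"
    and add: "\<And>A B. A \<in> S \<Longrightarrow> B \<in> S \<Longrightarrow> A + B \<in> S"
    and sc: "\<And>c A. A \<in> S \<Longrightarrow> c \<cdot>\<^sub>m A \<in> S"
    and br: "\<And>A B. A \<in> S \<Longrightarrow> B \<in> S \<Longrightarrow> commutator A B \<in> S"
    and d: "\<And>k. k < m \<Longrightarrow> uu m k k \<in> S"
    and up: "\<And>k. k + 1 < m \<Longrightarrow> uu m k (k+1) \<in> S"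
    and dn: "\<And>k. k + 1 < m \<Longrightarrow> uu m (k+1) k \<in> S"
  shows "A \<in> carrier_mat m m \<Longrightarrow> A \<in> S"
proof -
  have upd: "uu m a (a+e) \<in> S" if "a + e < m" for a e
    using that
  proof (induction e)
    case 0 then show ?case using d by simp
  next
    case (Suc e)
    show ?case
    proof (cases e)
      case 0 then show ?thesis using up Suc by simp
    next
      case (Suc e')
      have "uu m a (a + Suc e) = commutator (uu m a (a+e)) (uu m (a+e) (a+e+1))"
        using Suc.prems Suc by (subst comm_chain) auto
      then show ?thesis using br Suc.IH up Suc.prems by auto
    qed
  qed
  have dnd: "uu m (b+e) b \<in> S" if "b + e < m" for b e
    using that
  proof (induction e)
    case 0 then show ?case using d by simp
  next
    case (Suc e)
    show ?case
    proof (cases e)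
      case 0 then show ?thesis using dn Suc by simp
    next
      case (Suc e')
      have "uu m (b + Suc e) b = commutator (uu m (b+e+1) (b+e)) (uu m (b+e) b)"
        using Suc.prems Suc by (subst comm_chain) auto
      then show ?thesis using br Suc.IH dn Suc.prems by auto
    qed
  qed
  have all: "uu m a b \<in> S" if "a < m" "b < m" for a b
  proof (cases "a \<le> b")
    case True then show ?thesis using upd[of a "b-a"] that by simp
  next
    case False then show ?thesis using dnd[of b "a-b"] that by simp
  qed
  have zero: "0\<^sub>m m m \<in> S"
  proof -
    have "0 \<cdot>\<^sub>m uu m 0 0 \<in> S" using sc all m by auto
    moreover have "0 \<cdot>\<^sub>m uu m 0 0 = 0\<^sub>m m m" by (intro eq_matI) (auto simp: uu_def)
    ultimately show ?thesis by simp
  qed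
  have main: "\<forall>A \<in> carrier_mat m m. (\<forall>i j. i < m \<longrightarrow> j < m \<longrightarrow> k \<le> i*m+j \<longrightarrow> A $$ (i,j) = 0) \<longrightarrow> A \<in> S" for k
  proof (induction k)
    case 0
    show ?case
    proof (intro ballI impI)
      fix A :: "complex mat" assume A: "A \<in> carrier_mat m m" and z: "\<forall>i j. i < m \<longrightarrow> j < m \<longrightarrow> 0 \<le> i*m+j \<longrightarrow> A $$ (i,j) = 0"
      have "A = 0\<^sub>m m m" using A z by (intro eq_matI) auto
      then show "A \<in> S" using zero by simp
    qed
  next
    case (Suc k)
    show ?case
    proof (intro ballI impI)
      fix A :: "complex mat" assume A: "A \<in> carrier_mat m m" and z: "\<forall>i j. i < m \<longrightarrow> j < m \<longrightarrow> Suc k \<le> i*m+j \<longrightarrow> A $$ (i,j) = 0"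
      define i0 where "i0 = k div m"
      define j0 where "j0 = k mod m"
      have j0: "j0 < m" using m by (simp add: j0_def)
      have k0: "k = i0 * m + j0" by (simp add: i0_def j0_def)
      show "A \<in> S"
      proof (cases "i0 < m")
        case False
        have "\<forall>i j. i < m \<longrightarrow> j < m \<longrightarrow> k \<le> i*m+j \<longrightarrow> A $$ (i,j) = 0"
        proof (intro allI impI)
          fix i j assume ij: "i < m" "j < m" "k \<le> i*m+j"
          have "i * m + j < m * m"
          proof -
            have "i * m + j < i * m + m" using ij by simp
            also have "\<dots> = (i+1) * m" by simp
            also have "\<dots> \<le> m * m" using ij by (intro mult_right_mono) auto
            finally show ?thesis .
          qed
          moreover have "m * m \<le> i0 * m" using False by (intro mult_right_mono) auto
          ultimately show "A $$ (i,j) = 0" using ij k0 by linarith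
        qed
        then show ?thesis using Suc.IH A by blast
      next
        case True
        define A' where "A' = mat m m (\<lambda>(i,j). if i = i0 \<and> j = j0 then 0 else A $$ (i,j))"
        have A'c: "A' \<in> carrier_mat m m" by (simp add: A'_def)
        have "\<forall>i j. i < m \<longrightarrow> j < m \<longrightarrow> k \<le> i*m+j \<longrightarrow> A' $$ (i,j) = 0"
        proof (intro allI impI)
          fix i j assume ij: "i < m" "j < m" "k \<le> i*m+j"
          show "A' $$ (i,j) = 0"
          proof (cases "i*m+j = k")
            case True
            then have "i = i0 \<and> j = j0" using ij j0 k0
              by (metis add.commute div_mult_self1 div_less mod_mult_self1 mod_less less_zeroE not_gr_zero add.left_neutral)
            then show ?thesis using ij by (simp add: A'_def)
          next
            case False
            then have "Suc k \<le> i*m+j" using ij by simp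
            then show ?thesis using z ij by (simp add: A'_def)
          qed
        qed
        then have "A' \<in> S" using Suc.IH A'c by blast
        moreover have "A $$ (i0,j0) \<cdot>\<^sub>m uu m i0 j0 \<in> S" using sc all True j0 by auto
        ultimately have "A' + A $$ (i0,j0) \<cdot>\<^sub>m uu m i0 j0 \<in> S" using add by blast
        moreover have "A' + A $$ (i0,j0) \<cdot>\<^sub>m uu m i0 j0 = A" using A by (intro eq_matI) (auto simp: A'_def uu_def)
        ultimately show ?thesis by simp
      qed
    qed
  qed
  assume A: "A \<in> carrier_mat m m"
  have "\<forall>i j. i < m \<longrightarrow> j < m \<longrightarrow> m*m \<le> i*m+j \<longrightarrow> A $$ (i,j) = 0"
  proof (intro allI impI)
    fix i j assume ij: "i < m" "j < m" "m*m \<le> i*m+j"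
    have "i * m + j < i * m + m" using ij by simp
    also have "\<dots> = (i+1) * m" by simp
    also have "\<dots> \<le> m * m" using ij by (intro mult_right_mono) auto
    finally show "A $$ (i,j) = 0" using ij by linarith
  qed
  then show "A \<in> S" using main[of "m*m"] A by blast
qed

lemma comm_zero: "A \<in> carrier_mat m m \<Longrightarrow> commutator A (0\<^sub>m m m) = (0\<^sub>m m m :: complex mat)"
  "A \<in> carrier_mat m m \<Longrightarrow> commutator (0\<^sub>m m m) A = (0\<^sub>m m m :: complex mat)"
  by (auto simp: commutator_def intro!: eq_matI)

lemma gen2:
  fixes C :: "(complex mat \<times> complex mat) set"
  assumes n: "1 \<le> n" and Cs: "C \<subseteq> gsum n"
    and add: "\<And>p q. p \<in> C \<Longrightarrow> q \<in> C \<Longrightarrow> padd p q \<in> C"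
    and sc: "\<And>c p. p \<in> C \<Longrightarrow> psc c p \<in> C"
    and br: "\<And>p q. p \<in> C \<Longrightarrow> q \<in> C \<Longrightarrow> pbr p q \<in> C"
    and hX: "\<And>k. k + 1 < n \<Longrightarrow> (uu (Suc n) (k+1) k, uu n (k+1) k) \<in> C"
    and hY: "\<And>k. k + 1 < n \<Longrightarrow> (uu (Suc n) k (k+1), uu n k (k+1)) \<in> C"
    and hf: "(uu (Suc n) n (n-1), 0\<^sub>m n n) \<in> C"
    and he: "(uu (Suc n) (n-1) n, 0\<^sub>m n n) \<in> C"
    and hd: "\<And>k. k < n \<Longrightarrow> (uu (Suc n) k k, uu n k k) \<in> C"
    and hdn: "(uu (Suc n) n n, 0\<^sub>m n n) \<in> C"
  shows "gsum n \<subseteq> C"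
proof -
  let ?m = "Suc n"
  let ?Z1 = "0\<^sub>m ?m ?m :: complex mat" and ?Z2 = "0\<^sub>m n n :: complex mat"
  have mem: "q \<in> C" if "p \<in> C" "p = q" for p q using that by simp
  have sub: "padd p (psc (-1) q) \<in> C" if "p \<in> C" "q \<in> C" for p q using that add sc by blast
  have adj: "(uu ?m k (k+1), ?Z2) \<in> C \<and> (uu ?m (k+1) k, ?Z2) \<in> C \<and> (?Z1, uu n k (k+1)) \<in> C \<and> (?Z1, uu n (k+1) k) \<in> C"
    if k: "k + 1 < n" and q: "(?Z1, uu n (k+1) (k+1)) \<in> C" for k
  proof -
    have a1: "(?Z1, uu n k (k+1)) \<in> C"
    proof (rule mem)
      show "pbr (uu ?m k (k+1), uu n k (k+1)) (?Z1, uu n (k+1) (k+1)) \<in> C" using br hY[OF k] q by blast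
      show "pbr (uu ?m k (k+1), uu n k (k+1)) (?Z1, uu n (k+1) (k+1)) = (?Z1, uu n k (k+1))"
        unfolding pbr_def fst_conv snd_conv using k
        by (simp add: comm_zero comm_chain)
    qed
    have a2: "(?Z1, uu n (k+1) k) \<in> C"
    proof (rule mem)
      show "pbr (?Z1, uu n (k+1) (k+1)) (uu ?m (k+1) k, uu n (k+1) k) \<in> C" using br hX[OF k] q by blast
      show "pbr (?Z1, uu n (k+1) (k+1)) (uu ?m (k+1) k, uu n (k+1) k) = (?Z1, uu n (k+1) k)"
        unfolding pbr_def fst_conv snd_conv using k
        by (simp add: comm_zero comm_chain)
    qed
    have a3: "(uu ?m k (k+1), ?Z2) \<in> C"
    proof (rule mem)
      show "padd (uu ?m k (k+1), uu n k (k+1)) (psc (-1) (?Z1, uu n k (k+1))) \<in> C" using sub hY[OF k] a1 by blast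
      show "padd (uu ?m k (k+1), uu n k (k+1)) (psc (-1) (?Z1, uu n k (k+1))) = (uu ?m k (k+1), ?Z2)"
        unfolding padd_def psc_def fst_conv snd_conv prod.inject by (auto intro!: eq_matI)
    qed
    have a4: "(uu ?m (k+1) k, ?Z2) \<in> C"
    proof (rule mem)
      show "padd (uu ?m (k+1) k, uu n (k+1) k) (psc (-1) (?Z1, uu n (k+1) k)) \<in> C" using sub hX[OF k] a2 by blast
      show "padd (uu ?m (k+1) k, uu n (k+1) k) (psc (-1) (?Z1, uu n (k+1) k)) = (uu ?m (k+1) k, ?Z2)"
        unfolding padd_def psc_def fst_conv snd_conv prod.inject by (auto intro!: eq_matI)
    qed
    show ?thesis using a1 a2 a3 a4 by blast
  qed
  have split: "(?Z1, uu n k k) \<in> C" if k: "k < n" and p: "(uu ?m k k, ?Z2) \<in> C" for k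
  proof (rule mem)
    show "padd (uu ?m k k, uu n k k) (psc (-1) (uu ?m k k, ?Z2)) \<in> C" using sub hd[OF k] p by blast
    show "padd (uu ?m k k, uu n k k) (psc (-1) (uu ?m k k, ?Z2)) = (?Z1, uu n k k)"
      unfolding padd_def psc_def fst_conv snd_conv prod.inject by (auto intro!: eq_matI)
  qed
  have diag_from: "(uu ?m k k, ?Z2) \<in> C"
    if k: "k < n" and p1: "(uu ?m k (k+1), ?Z2) \<in> C" and p2: "(uu ?m (k+1) k, ?Z2) \<in> C" and p3: "(uu ?m (k+1) (k+1), ?Z2) \<in> C" for k
  proof (rule mem)
    show "padd (pbr (uu ?m k (k+1), ?Z2) (uu ?m (k+1) k, ?Z2)) (uu ?m (k+1) (k+1), ?Z2) \<in> C"
      using add br p1 p2 p3 by blast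
    have "commutator (uu ?m k (k+1)) (uu ?m (k+1) k) = uu ?m k k - uu ?m (k+1) (k+1)"
      using k by (intro comm_diag) auto
    then show "padd (pbr (uu ?m k (k+1), ?Z2) (uu ?m (k+1) k, ?Z2)) (uu ?m (k+1) (k+1), ?Z2) = (uu ?m k k, ?Z2)"
      unfolding padd_def pbr_def fst_conv snd_conv prod.inject using k
      by (auto simp: comm_zero uu_def intro!: eq_matI)
  qed
  have Qtop: "(uu ?m (n-1) (n-1), ?Z2) \<in> C"
    using diag_from[of "n-1"] n he hf hdn by simp
  have Q: "(uu ?m (n-1-j) (n-1-j), ?Z2) \<in> C \<and> (?Z1, uu n (n-1-j) (n-1-j)) \<in> C" if "j < n" for j
    using that
  proof (induction j)
    case 0 then show ?case using Qtop split[of "n-1"] n by simp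
  next
    case (Suc j)
    let ?k = "n - 1 - Suc j"
    have k: "?k + 1 < n" "?k + 1 = n - 1 - j" using Suc.prems by auto
    have IH: "(uu ?m (?k+1) (?k+1), ?Z2) \<in> C" "(?Z1, uu n (?k+1) (?k+1)) \<in> C"
      using Suc.IH Suc.prems k(2) by auto
    have A: "(uu ?m ?k (?k+1), ?Z2) \<in> C \<and> (uu ?m (?k+1) ?k, ?Z2) \<in> C" using adj[OF k(1) IH(2)] by blast
    have "(uu ?m ?k ?k, ?Z2) \<in> C" using diag_from[of ?k] A IH(1) k by auto
    then show ?case using split[of ?k] k by auto
  qed
  have D1: "(uu ?m k k, ?Z2) \<in> C" if "k < n" for k using Q[of "n-1-k"] that by auto
  have D2: "(?Z1, uu n k k) \<in> C" if "k < n" for k using Q[of "n-1-k"] that by auto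
  have S1: "(A, ?Z2) \<in> C" if A: "A \<in> carrier_mat ?m ?m" for A
  proof -
    let ?S = "{A. A \<in> carrier_mat ?m ?m \<and> (A, ?Z2) \<in> C}"
    have "A \<in> ?S"
    proof (rule gen1[where m="?m"])
      show "A \<in> carrier_mat ?m ?m" by fact
      fix A B assume "A \<in> ?S" "B \<in> ?S"
      then have AB: "A \<in> carrier_mat ?m ?m" "B \<in> carrier_mat ?m ?m" "(A, ?Z2) \<in> C" "(B, ?Z2) \<in> C" by auto
      have "padd (A, ?Z2) (B, ?Z2) \<in> C" using add AB by blast
      moreover have "padd (A, ?Z2) (B, ?Z2) = (A + B, ?Z2)" by (auto simp: padd_def intro!: eq_matI)
      ultimately show "A + B \<in> ?S" using AB by auto
      have "pbr (A, ?Z2) (B, ?Z2) \<in> C" using br AB by blast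
      moreover have "pbr (A, ?Z2) (B, ?Z2) = (commutator A B, ?Z2)" by (simp add: pbr_def comm_zero)
      ultimately show "commutator A B \<in> ?S" using AB by (auto simp: commutator_def)
    next
      fix c A assume "A \<in> ?S"
      then have AB: "A \<in> carrier_mat ?m ?m" "(A, ?Z2) \<in> C" by auto
      have "psc c (A, ?Z2) \<in> C" using sc AB by blast
      moreover have "psc c (A, ?Z2) = (c \<cdot>\<^sub>m A, ?Z2)" by (auto simp: psc_def intro!: eq_matI)
      ultimately show "c \<cdot>\<^sub>m A \<in> ?S" using AB by auto
    next
      fix k assume k: "k < ?m"
      show "uu ?m k k \<in> ?S"
      proof (cases "k < n")
        case True then show ?thesis using D1 by simp
      next
        case False then have "k = n" using k by simp
        then show ?thesis using hdn by simp
      qed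
    next
      fix k assume k: "k + 1 < ?m"
      show "uu ?m k (k+1) \<in> ?S"
      proof (cases "k + 1 < n")
        case True then show ?thesis using adj[OF True D2[of "k+1"]] by simp
      next
        case False then have "k = n - 1" using k by simp
        then show ?thesis using he n by simp
      qed
      show "uu ?m (k+1) k \<in> ?S"
      proof (cases "k + 1 < n")
        case True then show ?thesis using adj[OF True D2[of "k+1"]] by simp
      next
        case False then have "k = n - 1" using k by simp
        then show ?thesis using hf n by simp
      qed
    qed simp
    then show ?thesis by simp
  qed
  have S2: "(?Z1, B) \<in> C" if B: "B \<in> carrier_mat n n" for B
  proof -
    let ?S = "{B. B \<in> carrier_mat n n \<and> (?Z1, B) \<in> C}"
    have "B \<in> ?S"
    proof (rule gen1[where m="n"])
      show "B \<in> carrier_mat n n" by fact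
      show "1 \<le> n" by fact
      fix A B assume "A \<in> ?S" "B \<in> ?S"
      then have AB: "A \<in> carrier_mat n n" "B \<in> carrier_mat n n" "(?Z1, A) \<in> C" "(?Z1, B) \<in> C" by auto
      have "padd (?Z1, A) (?Z1, B) \<in> C" using add AB by blast
      moreover have "padd (?Z1, A) (?Z1, B) = (?Z1, A + B)" by (auto simp: padd_def intro!: eq_matI)
      ultimately show "A + B \<in> ?S" using AB by auto
      have "pbr (?Z1, A) (?Z1, B) \<in> C" using br AB by blast
      moreover have "pbr (?Z1, A) (?Z1, B) = (?Z1, commutator A B)" by (simp add: pbr_def comm_zero)
      ultimately show "commutator A B \<in> ?S" using AB by (auto simp: commutator_def)
    next
      fix c A assume "A \<in> ?S"
      then have AB: "A \<in> carrier_mat n n" "(?Z1, A) \<in> C" by auto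
      have "psc c (?Z1, A) \<in> C" using sc AB by blast
      moreover have "psc c (?Z1, A) = (?Z1, c \<cdot>\<^sub>m A)" by (auto simp: psc_def intro!: eq_matI)
      ultimately show "c \<cdot>\<^sub>m A \<in> ?S" using AB by auto
    next
      fix k assume k: "k < n"
      show "uu n k k \<in> ?S" using D2 k by simp
    next
      fix k assume k: "k + 1 < n"
      show "uu n k (k+1) \<in> ?S" using adj[OF k D2[of "k+1"]] k by simp
      show "uu n (k+1) k \<in> ?S" using adj[OF k D2[of "k+1"]] k by simp
    qed
    then show ?thesis by simp
  qed
  show ?thesis
  proof
    fix p assume p: "p \<in> gsum n"
    obtain A B where pAB: "p = (A, B)" by (cases p)
    have A: "A \<in> carrier_mat ?m ?m" and B: "B \<in> carrier_mat n n" using p pAB by (auto simp: gsum_def)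
    have "padd (A, ?Z2) (?Z1, B) \<in> C" using add S1[OF A] S2[OF B] by blast
    moreover have "padd (A, ?Z2) (?Z1, B) = (A, B)" using A B by (auto simp: padd_def intro!: eq_matI)
    ultimately show "p \<in> C" using pAB by simp
  qed
qed



lemma calg_zero: "calg sc \<Longrightarrow> sc 0 x = 0"
proof -
  assume c: "calg sc"
  have "sc (0 + 0) x = sc 0 x + sc 0 x" using c unfolding calg_def by blast
  then show ?thesis by simp
qed
lemma calg_neg: "calg sc \<Longrightarrow> sc (-1) x = - x"
proof -
  assume c: "calg sc"
  have "sc (-1 + 1) x = sc (-1) x + sc 1 x" using c unfolding calg_def by blast
  moreover have "sc 1 x = x" using c unfolding calg_def by blast
  ultimately have "0 = sc (-1) x + x" using calg_zero[OF c] by simp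
  then show ?thesis by (simp add: eq_neg_iff_add_eq_0)
qed
lemma calg_add: "calg sc \<Longrightarrow> sc c (x + y) = sc c x + sc c y" by (simp add: calg_def)
lemma calg_mult: "calg sc \<Longrightarrow> sc (c * d) x = sc c (sc d x)" by (simp add: calg_def)
lemma calg_one: "calg sc \<Longrightarrow> sc 1 x = x" by (simp add: calg_def)

lemma hom_add: "alg_hom sA sB f \<Longrightarrow> f (x + y) = f x + f y" by (simp add: alg_hom_def)
lemma hom_mult: "alg_hom sA sB f \<Longrightarrow> f (x * y) = f x * f y" by (simp add: alg_hom_def)
lemma hom_sc: "alg_hom sA sB f \<Longrightarrow> f (sA c x) = sB c (f x)" by (simp add: alg_hom_def)
lemma hom_diff: "alg_hom sA sB f \<Longrightarrow> f (x - y) = f x - f y"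
proof -
  assume h: "alg_hom sA sB f"
  have "f (x - y + y) = f (x - y) + f y" using h unfolding alg_hom_def by blast
  then show ?thesis by (simp add: algebra_simps)
qed

lemma lie_add: "lie_map L addv scv brv sc \<phi> \<Longrightarrow> x \<in> L \<Longrightarrow> y \<in> L \<Longrightarrow> \<phi> (addv x y) = \<phi> x + \<phi> y"
  by (simp add: lie_map_def)
lemma lie_sc: "lie_map L addv scv brv sc \<phi> \<Longrightarrow> x \<in> L \<Longrightarrow> \<phi> (scv c x) = sc c (\<phi> x)"
  by (simp add: lie_map_def)
lemma lie_br: "lie_map L addv scv brv sc \<phi> \<Longrightarrow> x \<in> L \<Longrightarrow> y \<in> L \<Longrightarrow> \<phi> (brv x y) = \<phi> x * \<phi> y - \<phi> y * \<phi> x"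
  by (simp add: lie_map_def)

lemma gsum_gens: "ce n i \<in> gsum n" "cf n i \<in> gsum n" "ch n i \<in> gsum n" "ceb n i \<in> gsum n" "cfb n i \<in> gsum n" "chb n i \<in> gsum n"
  by (auto simp: gsum_def ce_def cf_def ch_def ceb_def cfb_def chb_def Eu_def)
lemma gsum_padd: "p \<in> gsum n \<Longrightarrow> q \<in> gsum n \<Longrightarrow> padd p q \<in> gsum n"
  by (auto simp: gsum_def padd_def)
lemma gsum_psc: "p \<in> gsum n \<Longrightarrow> psc c p \<in> gsum n"
  by (auto simp: gsum_def psc_def)
lemma gsum_pbr: "p \<in> gsum n \<Longrightarrow> q \<in> gsum n \<Longrightarrow> pbr p q \<in> gsum n"
  by (auto simp: gsum_def pbr_def commutator_def)

lemma VALS: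
  assumes n: "1 \<le> n" and cB: "calg scB" and lB: "lie_map (gsum n) padd psc pbr scB \<iota>'"
  shows "\<And>i. 1 \<le> i \<Longrightarrow> i < n \<Longrightarrow> \<iota>' (Psi n (be n i)) = \<iota>' (cf n i) + \<iota>' (cfb n i)"
    and "\<And>i. 1 \<le> i \<Longrightarrow> i < n \<Longrightarrow> \<iota>' (Psi n (bf n i)) = \<iota>' (ce n i) + \<iota>' (ceb n i)"
    and "\<iota>' (Psi n (be n n)) = scB 2 (\<iota>' (cf n n))"
    and "\<iota>' (Psi n (bf n n)) = \<iota>' (ce n n)"
    and "\<And>i. 1 \<le> i \<Longrightarrow> i \<le> n \<Longrightarrow> \<iota>' (Psi n (bd n i)) = - \<iota>' (ch n i) - \<iota>' (chb n i)"
    and "\<iota>' (Psi n (bd n (n+1))) = - scB 2 (\<iota>' (ch n (n+1)))"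
proof -
  fix i assume i: "1 \<le> i" "i < n"
  show "\<iota>' (Psi n (be n i)) = \<iota>' (cf n i) + \<iota>' (cfb n i)"
    unfolding Psi_be[OF i] by (rule lie_add[OF lB]) (simp_all add: gsum_gens)
  show "\<iota>' (Psi n (bf n i)) = \<iota>' (ce n i) + \<iota>' (ceb n i)"
    unfolding Psi_bf[OF i] by (rule lie_add[OF lB]) (simp_all add: gsum_gens)
next
  show "\<iota>' (Psi n (be n n)) = scB 2 (\<iota>' (cf n n))"
    unfolding Psi_ben[OF n] by (rule lie_sc[OF lB]) (simp add: gsum_gens)
  show "\<iota>' (Psi n (bf n n)) = \<iota>' (ce n n)" unfolding Psi_bfn[OF n] ..
next
  fix i assume i: "1 \<le> i" "i \<le> n"
  have "\<iota>' (Psi n (bd n i)) = scB (-1) (\<iota>' (padd (ch n i) (chb n i)))"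
    unfolding Psi_bd[OF i] by (rule lie_sc[OF lB]) (simp add: gsum_gens gsum_padd)
  also have "\<dots> = - (\<iota>' (ch n i) + \<iota>' (chb n i))"
    by (simp add: calg_neg[OF cB] lie_add[OF lB] gsum_gens)
  finally show "\<iota>' (Psi n (bd n i)) = - \<iota>' (ch n i) - \<iota>' (chb n i)" by (simp add: algebra_simps)
next
  have "\<iota>' (Psi n (bd n (n+1))) = scB ((-1) * 2) (\<iota>' (ch n (n+1)))"
    unfolding Psi_bdn by (subst lie_sc[OF lB]) (simp_all add: gsum_gens)
  also have "\<dots> = - scB 2 (\<iota>' (ch n (n+1)))"
    by (simp only: calg_mult[OF cB] calg_neg[OF cB])
  finally show "\<iota>' (Psi n (bd n (n+1))) = - scB 2 (\<iota>' (ch n (n+1)))" .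
qed

lemma UNIQ:
  fixes \<psi> :: "'a::ring_1 \<Rightarrow> 'b::ring_1" and \<iota> :: "complex mat \<Rightarrow> 'a" and \<iota>' :: "complex mat \<times> complex mat \<Rightarrow> 'b"
  assumes n: "1 \<le> n" and cB: "calg scB"
    and lA: "lie_map (gtheta n) (+) (\<cdot>\<^sub>m) commutator scA \<iota>"
    and lB: "lie_map (gsum n) padd psc pbr scB \<iota>'"
    and h: "alg_hom scA scB \<psi>"
    and g1: "\<forall>i. 1 \<le> i \<and> i < n \<longrightarrow> \<psi> (\<iota> (be n i)) = \<iota>' (cf n i) + \<iota>' (cfb n i) \<and> \<psi> (\<iota> (bf n i)) = \<iota>' (ce n i) + \<iota>' (ceb n i)"
    and g3: "\<psi> (\<iota> (be n n)) = scB 2 (\<iota>' (cf n n))"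
    and g4: "\<psi> (\<iota> (bf n n)) = \<iota>' (ce n n)"
    and g5: "\<forall>i. 1 \<le> i \<and> i \<le> n \<longrightarrow> \<psi> (\<iota> (bd n i)) = - \<iota>' (ch n i) - \<iota>' (chb n i)"
    and g6: "\<psi> (\<iota> (bd n (n+1))) = - scB 2 (\<iota>' (ch n (n+1)))"
  shows "\<forall>x\<in>gtheta n. \<psi> (\<iota> x) = \<iota>' (Psi n x)"
proof -
  define C where "C = {p \<in> gsum n. \<psi> (\<iota> (Phi n p)) = \<iota>' p}"
  have Lm: "Phi n p \<in> gtheta n" if "p \<in> gsum n" for p using Phi_gt[OF that] by (simp add: gtheta_iff)
  have inC: "Psi n X \<in> C" if X: "X \<in> gtheta n" and v: "\<psi> (\<iota> X) = \<iota>' (Psi n X)" for X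
  proof -
    have g: "inGt n X" using X by (simp add: gtheta_iff)
    show ?thesis unfolding C_def using Psi_gsum[OF g] Phi_Psi[OF g] v by simp
  qed
  have Cs: "C \<subseteq> gsum n" by (auto simp: C_def)
  have add: "padd p q \<in> C" if "p \<in> C" "q \<in> C" for p q
  proof -
    have pq: "p \<in> gsum n" "q \<in> gsum n" "\<psi> (\<iota> (Phi n p)) = \<iota>' p" "\<psi> (\<iota> (Phi n q)) = \<iota>' q" using that by (auto simp: C_def)
    have "\<psi> (\<iota> (Phi n (padd p q))) = \<psi> (\<iota> (Phi n p) + \<iota> (Phi n q))"
      unfolding Phi_add[OF pq(1,2)] using lie_add[OF lA Lm[OF pq(1)] Lm[OF pq(2)]] by simp
    also have "\<dots> = \<iota>' (padd p q)" using hom_add[OF h] pq lie_add[OF lB pq(1,2)] by simp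
    finally show ?thesis using gsum_padd[OF pq(1,2)] by (simp add: C_def)
  qed
  have sc: "psc c p \<in> C" if "p \<in> C" for c p
  proof -
    have pq: "p \<in> gsum n" "\<psi> (\<iota> (Phi n p)) = \<iota>' p" using that by (auto simp: C_def)
    have "\<psi> (\<iota> (Phi n (psc c p))) = \<psi> (scA c (\<iota> (Phi n p)))"
      unfolding Phi_smult[OF pq(1)] using lie_sc[OF lA Lm[OF pq(1)]] by simp
    also have "\<dots> = \<iota>' (psc c p)" using hom_sc[OF h] pq lie_sc[OF lB pq(1)] by simp
    finally show ?thesis using gsum_psc[OF pq(1)] by (simp add: C_def)
  qed
  have br: "pbr p q \<in> C" if "p \<in> C" "q \<in> C" for p q
  proof -
    have pq: "p \<in> gsum n" "q \<in> gsum n" "\<psi> (\<iota> (Phi n p)) = \<iota>' p" "\<psi> (\<iota> (Phi n q)) = \<iota>' q" using that by (auto simp: C_def)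
    have "\<psi> (\<iota> (Phi n (pbr p q))) = \<psi> (\<iota> (Phi n p) * \<iota> (Phi n q) - \<iota> (Phi n q) * \<iota> (Phi n p))"
      unfolding Phi_br[OF pq(1,2)] using lie_br[OF lA Lm[OF pq(1)] Lm[OF pq(2)]] by simp
    also have "\<dots> = \<iota>' (pbr p q)" using hom_diff[OF h] hom_mult[OF h] pq lie_br[OF lB pq(1,2)] by simp
    finally show ?thesis using gsum_pbr[OF pq(1,2)] by (simp add: C_def)
  qed
  have gt: "X \<in> gtheta n" if "inGt n X" for X using that by (simp add: gtheta_iff)
  have hX: "(uu (Suc n) (k+1) k, uu n (k+1) k) \<in> C" if k: "k + 1 < n" for k
  proof -
    have i: "1 \<le> k+1" "k+1 < n" using k by auto
    have "Psi n (be n (k+1)) \<in> C"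
      using inC[OF gt[OF inGt_be[of "k+1" n]]] VALS(1)[OF n cB lB i] g1 i by simp
    moreover have "Psi n (be n (k+1)) = (uu (Suc n) (k+1) k, uu n (k+1) k)"
      unfolding Psi_be[OF i] padd_def cf_def cfb_def by (auto simp: Eu_uu uu_def intro!: eq_matI)
    ultimately show ?thesis by simp
  qed
  have hY: "(uu (Suc n) k (k+1), uu n k (k+1)) \<in> C" if k: "k + 1 < n" for k
  proof -
    have i: "1 \<le> k+1" "k+1 < n" using k by auto
    have "Psi n (bf n (k+1)) \<in> C"
      using inC[OF gt[OF inGt_bf[of "k+1" n]]] VALS(2)[OF n cB lB i] g1 i by simp
    moreover have "Psi n (bf n (k+1)) = (uu (Suc n) k (k+1), uu n k (k+1))"
      unfolding Psi_bf[OF i] padd_def ce_def ceb_def by (auto simp: Eu_uu uu_def intro!: eq_matI)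
    ultimately show ?thesis by simp
  qed
  have hf: "(uu (Suc n) n (n-1), 0\<^sub>m n n) \<in> C"
  proof -
    have "Psi n (be n n) \<in> C"
      using inC[OF gt[OF inGt_be[of n n]]] VALS(3)[OF n cB lB] g3 n by simp
    then have "psc (1/2) (Psi n (be n n)) \<in> C" by (rule sc)
    moreover have "psc (1/2) (Psi n (be n n)) = (uu (Suc n) n (n-1), 0\<^sub>m n n)"
      unfolding Psi_ben[OF n] psc_def cf_def using n by (auto simp: Eu_uu uu_def intro!: eq_matI)
    ultimately show ?thesis by simp
  qed
  have he: "(uu (Suc n) (n-1) n, 0\<^sub>m n n) \<in> C"
  proof -
    have "Psi n (bf n n) \<in> C"
      using inC[OF gt[OF inGt_bf[of n n]]] VALS(4)[OF n cB lB] g4 n by simp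
    moreover have "Psi n (bf n n) = (uu (Suc n) (n-1) n, 0\<^sub>m n n)"
      unfolding Psi_bfn[OF n] ce_def using n by (auto simp: Eu_uu uu_def intro!: eq_matI)
    ultimately show ?thesis by simp
  qed
  have hd: "(uu (Suc n) k k, uu n k k) \<in> C" if k: "k < n" for k
  proof -
    have i: "1 \<le> k+1" "k+1 \<le> n" using k by auto
    have "Psi n (bd n (k+1)) \<in> C"
      using inC[OF gt[OF inGt_bd[of "k+1" n]]] VALS(5)[OF n cB lB i] g5 i by simp
    then have "psc (-1) (Psi n (bd n (k+1))) \<in> C" by (rule sc)
    moreover have "psc (-1) (Psi n (bd n (k+1))) = (uu (Suc n) k k, uu n k k)"
      unfolding Psi_bd[OF i] psc_def padd_def ch_def chb_def by (auto simp: Eu_uu uu_def intro!: eq_matI)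
    ultimately show ?thesis by simp
  qed
  have hdn: "(uu (Suc n) n n, 0\<^sub>m n n) \<in> C"
  proof -
    have "Psi n (bd n (n+1)) \<in> C"
      using inC[OF gt[OF inGt_bdn[of n]]] VALS(6)[OF n cB lB] g6 by simp
    then have "psc (-1/2) (Psi n (bd n (n+1))) \<in> C" by (rule sc)
    moreover have "psc (-1/2) (Psi n (bd n (n+1))) = (uu (Suc n) n n, 0\<^sub>m n n)"
      unfolding Psi_bdn psc_def ch_def by (auto simp: Eu_uu uu_def intro!: eq_matI)
    ultimately show ?thesis by simp
  qed
  have all: "gsum n \<subseteq> C"
    by (rule gen2[OF n Cs add sc br hX hY hf he hd hdn])
  show ?thesis
  proof
    fix x assume x: "x \<in> gtheta n"
    have g: "inGt n x" using x by (simp add: gtheta_iff)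
    have "Psi n x \<in> C" using all Psi_gsum[OF g] by blast
    then show "\<psi> (\<iota> x) = \<iota>' (Psi n x)" unfolding C_def using Phi_Psi[OF g] by simp
  qed
qed

theorem lemma2:
  fixes n :: nat
    and scA :: "complex \<Rightarrow> 'a::ring_1 \<Rightarrow> 'a"
    and \<iota> :: "complex mat \<Rightarrow> 'a"
    and scB :: "complex \<Rightarrow> 'b::ring_1 \<Rightarrow> 'b"
    and \<iota>' :: "complex mat \<times> complex mat \<Rightarrow> 'b"
  assumes "n \<ge> 1"
    and "is_uea (gtheta n) (+) (\<cdot>\<^sub>m) commutator scA \<iota> TYPE('b)"
    and "is_uea (gsum n) padd psc pbr scB \<iota>' TYPE('b)"
  shows "\<exists>!\<psi>. alg_hom scA scB \<psi> \<and>
     (\<forall>i. 1 \<le> i \<and> i < n \<longrightarrow>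
        \<psi> (\<iota> (be n i)) = \<iota>' (cf n i) + \<iota>' (cfb n i) \<and>
        \<psi> (\<iota> (bf n i)) = \<iota>' (ce n i) + \<iota>' (ceb n i)) \<and>
     \<psi> (\<iota> (be n n)) = scB 2 (\<iota>' (cf n n)) \<and>
     \<psi> (\<iota> (bf n n)) = \<iota>' (ce n n) \<and>
     (\<forall>i. 1 \<le> i \<and> i \<le> n \<longrightarrow> \<psi> (\<iota> (bd n i)) = - \<iota>' (ch n i) - \<iota>' (chb n i)) \<and>
     \<psi> (\<iota> (bd n (n+1))) = - scB 2 (\<iota>' (ch n (n+1)))"
proof -
  have n: "1 \<le> n" using assms(1) by simp
  have lA: "lie_map (gtheta n) (+) (\<cdot>\<^sub>m) commutator scA \<iota>"
    and univ: "\<And>\<phi>. lie_map (gtheta n) (+) (\<cdot>\<^sub>m) commutator scB \<phi> \<Longrightarrow>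
        \<exists>!\<Phi>. alg_hom scA scB \<Phi> \<and> (\<forall>x\<in>gtheta n. \<Phi> (\<iota> x) = \<phi> x)"
    using assms(2) assms(3) unfolding is_uea_def by blast+
  have cB: "calg scB" and lB: "lie_map (gsum n) padd psc pbr scB \<iota>'"
    using assms(3) unfolding is_uea_def by blast+
  define \<phi> where "\<phi> = (\<lambda>x. \<iota>' (Psi n x))"
  have gt: "inGt n x" if "x \<in> gtheta n" for x using that by (simp add: gtheta_iff)
  have lphi: "lie_map (gtheta n) (+) (\<cdot>\<^sub>m) commutator scB \<phi>"
    unfolding lie_map_def \<phi>_def
  proof (intro conjI ballI allI)
    fix x y assume x: "x \<in> gtheta n" and y: "y \<in> gtheta n"
    show "\<iota>' (Psi n (x + y)) = \<iota>' (Psi n x) + \<iota>' (Psi n y)"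
      unfolding Psi_add[OF gt[OF x] gt[OF y]] by (rule lie_add[OF lB Psi_gsum[OF gt[OF x]] Psi_gsum[OF gt[OF y]]])
    show "\<iota>' (Psi n (commutator x y)) = \<iota>' (Psi n x) * \<iota>' (Psi n y) - \<iota>' (Psi n y) * \<iota>' (Psi n x)"
      unfolding Psi_br[OF gt[OF x] gt[OF y]] by (rule lie_br[OF lB Psi_gsum[OF gt[OF x]] Psi_gsum[OF gt[OF y]]])
  next
    fix c x assume x: "x \<in> gtheta n"
    show "\<iota>' (Psi n (c \<cdot>\<^sub>m x)) = scB c (\<iota>' (Psi n x))"
      unfolding Psi_smult[OF gt[OF x]] by (rule lie_sc[OF lB Psi_gsum[OF gt[OF x]]])
  qed
  obtain \<Phi> where \<Phi>: "alg_hom scA scB \<Phi>" "\<forall>x\<in>gtheta n. \<Phi> (\<iota> x) = \<phi> x"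
    and uq: "\<And>\<Psi>. alg_hom scA scB \<Psi> \<and> (\<forall>x\<in>gtheta n. \<Psi> (\<iota> x) = \<phi> x) \<Longrightarrow> \<Psi> = \<Phi>"
    using univ[OF lphi] by metis
  have v: "\<Phi> (\<iota> X) = \<iota>' (Psi n X)" if "inGt n X" for X
    using \<Phi>(2) that by (simp add: gtheta_iff \<phi>_def)
  show ?thesis
  proof (rule ex1I[of _ \<Phi>])
    show "alg_hom scA scB \<Phi> \<and>
     (\<forall>i. 1 \<le> i \<and> i < n \<longrightarrow>
        \<Phi> (\<iota> (be n i)) = \<iota>' (cf n i) + \<iota>' (cfb n i) \<and>
        \<Phi> (\<iota> (bf n i)) = \<iota>' (ce n i) + \<iota>' (ceb n i)) \<and>
     \<Phi> (\<iota> (be n n)) = scB 2 (\<iota>' (cf n n)) \<and>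
     \<Phi> (\<iota> (bf n n)) = \<iota>' (ce n n) \<and>
     (\<forall>i. 1 \<le> i \<and> i \<le> n \<longrightarrow> \<Phi> (\<iota> (bd n i)) = - \<iota>' (ch n i) - \<iota>' (chb n i)) \<and>
     \<Phi> (\<iota> (bd n (n+1))) = - scB 2 (\<iota>' (ch n (n+1)))"
      using \<Phi>(1) n v[OF inGt_bdn[of n]] VALS(6)[OF n cB lB]
      by (auto simp: v inGt_be inGt_bf inGt_bd inGt_bdn VALS[OF n cB lB])
  next
    fix \<psi> assume H: "alg_hom scA scB \<psi> \<and>
     (\<forall>i. 1 \<le> i \<and> i < n \<longrightarrow>
        \<psi> (\<iota> (be n i)) = \<iota>' (cf n i) + \<iota>' (cfb n i) \<and>
        \<psi> (\<iota> (bf n i)) = \<iota>' (ce n i) + \<iota>' (ceb n i)) \<and>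
     \<psi> (\<iota> (be n n)) = scB 2 (\<iota>' (cf n n)) \<and>
     \<psi> (\<iota> (bf n n)) = \<iota>' (ce n n) \<and>
     (\<forall>i. 1 \<le> i \<and> i \<le> n \<longrightarrow> \<psi> (\<iota> (bd n i)) = - \<iota>' (ch n i) - \<iota>' (chb n i)) \<and>
     \<psi> (\<iota> (bd n (n+1))) = - scB 2 (\<iota>' (ch n (n+1)))"
    have "\<forall>x\<in>gtheta n. \<psi> (\<iota> x) = \<iota>' (Psi n x)"
      using H by (intro UNIQ[OF n cB lA lB]) auto
    then show "\<psi> = \<Phi>" using H by (intro uq) (simp add: \<phi>_def)
  qed
qed


end
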